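(* Let $\mu$ be a distribution on $\{0,1\}^{\mathbb{N}}$ such that the space $(\mathbb{N},\xi)$ is not totally bounded, and let $\varepsilon\in(0,1]$ be such that $\mathcal{N}_\xi(\varepsilon)=\infty$. Then for all $n\ge1$, $\Delta_n(\mu)\ge\frac{\varepsilon^2}{6}$. Consequently, if $\Delta_n(\mu)\to0$ as $n\to\infty$, then $(\mathbb{N},\xi)$ is totally bounded.
   Context: For $X\sim\mu$, define $\xi(i,j):=\mathbb{P}(X_i\neq X_j)$ for $i,j\in\mathbb{N}$. For $\varepsilon>0$, $\mathcal{N}_\xi(\varepsilon)$ is the $\varepsilon$-covering number of $(\mathbb{N},\xi)$: the minimal cardinality of a set $S\subset\mathbb{N}$ such that every $i\in\mathbb{N}$ has some $s\in S$ with $\xi(i,s)\le\varepsilon$. $(\mathbb{N},\xi)$ is totally bounded if $\mathcal{N}_\xi(\varepsilon)<\infty$ for all $\varepsilon>0$. For $n\ge1$, with $X^{(1)},\dots,X^{(n)}$ i.i.d. from $\mu$, $\Delta_n(\mu):=\mathbb{E}\sup_{j\in\mathbb{N}}\left|\frac1n\sum_{i=1}^nX^{(i)}_j-\mathbb{E}[X_j]\right|$. *)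

theory Defs
  imports "HOL-Probability.Probability"
begin

text \<open>A distribution mu on {0,1}^N is a probability measure on nat => bool whose
  sigma algebra is the product sigma algebra (true = 1, false = 0).\<close>

definition binseq_distr :: "(nat \<Rightarrow> bool) measure \<Rightarrow> bool" where
  "binseq_distr \<mu> \<longleftrightarrow> prob_space \<mu> \<and>
     sets \<mu> = sets (\<Pi>\<^sub>M i\<in>(UNIV::nat set). count_space (UNIV::bool set))"

definition xi :: "(nat \<Rightarrow> bool) measure \<Rightarrow> nat \<Rightarrow> nat \<Rightarrow> real" where
  "xi \<mu> i j = measure \<mu> {x \<in> space \<mu>. x i \<noteq> x j}"

definition covering_number :: "(nat \<Rightarrow> bool) measure \<Rightarrow> real \<Rightarrow> enat" where
  "covering_number \<mu> \<epsilon> =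
     Inf ((\<lambda>S. if finite S then enat (card S) else \<infinity>) `
          {S :: nat set. \<forall>i. \<exists>s\<in>S. xi \<mu> i s \<le> \<epsilon>})"

definition xi_totally_bounded :: "(nat \<Rightarrow> bool) measure \<Rightarrow> bool" where
  "xi_totally_bounded \<mu> \<longleftrightarrow> (\<forall>\<epsilon>>0. covering_number \<mu> \<epsilon> < \<infinity>)"

text \<open>Delta_n(mu) = E sup_j |1/n sum_{i<n} X^(i)_j - E X_j| with X^(0..n-1) iid from mu
  (modelled by the product measure), where booleans are read as 0/1.\<close>
definition Delta :: "nat \<Rightarrow> (nat \<Rightarrow> bool) measure \<Rightarrow> real" where
  "Delta n \<mu> = (\<integral>X. (SUP j. \<bar>(\<Sum>i<n. of_bool (X i j)) / real n - measure \<mu> {x \<in> space \<mu>. x j}\<bar>)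
                 \<partial>(\<Pi>\<^sub>M i\<in>{..<n}. \<mu>))"

end

theory Submission
  imports Defs
begin


fun ravg :: "nat \<Rightarrow> ((nat \<Rightarrow> real) \<Rightarrow> real) \<Rightarrow> real" where
  "ravg 0 F = F (\<lambda>_. 0)"
| "ravg (Suc n) F = (ravg n (\<lambda>s. F (s(n := 1))) + ravg n (\<lambda>s. F (s(n := -1)))) / 2"

definition pm1 :: "nat \<Rightarrow> (nat \<Rightarrow> real) \<Rightarrow> bool" where
  "pm1 n s \<longleftrightarrow> (\<forall>i<n. s i = 1 \<or> s i = -1)"

lemma pm1_upd: "pm1 n s \<Longrightarrow> (c = 1 \<or> c = -1) \<Longrightarrow> pm1 (Suc n) (s(n := c))"
  unfolding pm1_def by (auto simp: less_Suc_eq)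

lemma ravg_const[simp]: "ravg n (\<lambda>_. c) = c"
  by (induction n) auto

lemma ravg_add: "ravg n (\<lambda>s. F s + G s) = ravg n F + ravg n G"
  by (induction n arbitrary: F G) (auto simp: field_simps)

lemma ravg_cmult: "ravg n (\<lambda>s. c * F s) = c * ravg n F"
  by (induction n arbitrary: F) (auto simp: field_simps)

lemma ravg_mono:
  assumes "\<And>s. pm1 n s \<Longrightarrow> F s \<le> G s"
  shows "ravg n F \<le> ravg n G"
  using assms
proof (induction n arbitrary: F G)
  case 0
  then show ?case by (simp add: pm1_def)
next
  case (Suc n)
  have "ravg n (\<lambda>s. F (s(n := 1))) \<le> ravg n (\<lambda>s. G (s(n := 1)))"
    by (rule Suc.IH, rule Suc.prems, rule pm1_upd) auto
  moreover have "ravg n (\<lambda>s. F (s(n := -1))) \<le> ravg n (\<lambda>s. G (s(n := -1)))"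
    by (rule Suc.IH, rule Suc.prems, rule pm1_upd) auto
  ultimately show ?case by simp
qed

lemma ravg_cong:
  assumes "\<And>s. pm1 n s \<Longrightarrow> F s = G s"
  shows "ravg n F = ravg n G"
  using ravg_mono[of n F G] ravg_mono[of n G F] assms by force

lemma ravg_neg: "ravg n (\<lambda>s. F (\<lambda>i. - s i)) = ravg n F"
proof (induction n arbitrary: F)
  case 0
  then show ?case by simp
next
  case (Suc n)
  have e1: "\<And>s::nat\<Rightarrow>real. (\<lambda>i. - (s(n := 1)) i) = (\<lambda>i. - s i)(n := -1)" and e2: "\<And>s::nat\<Rightarrow>real. (\<lambda>i. - (s(n := -1)) i) = (\<lambda>i. - s i)(n := 1)"
    by (auto simp: fun_eq_iff)
  have a: "ravg n (\<lambda>s. F (\<lambda>i. - (s(n := 1)) i)) = ravg n (\<lambda>s. F (s(n := -1)))"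
    unfolding e1 using Suc.IH[of "\<lambda>s. F (s(n := -1))"] by simp
  have b: "ravg n (\<lambda>s. F (\<lambda>i. - (s(n := -1)) i)) = ravg n (\<lambda>s. F (s(n := 1)))"
    unfolding e2 using Suc.IH[of "\<lambda>s. F (s(n := 1))"] by simp
  show ?case by (simp only: ravg.simps a b) simp
qed

lemma ravg_sq: "ravg n (\<lambda>s. (c + (\<Sum>i<n. s i))\<^sup>2) = c\<^sup>2 + n"
proof (induction n arbitrary: c)
  case 0
  then show ?case by simp
next
  case (Suc n)
  have "ravg n (\<lambda>s. (c + (\<Sum>i<Suc n. (s(n := 1)) i))\<^sup>2) = ravg n (\<lambda>s. ((c + 1) + (\<Sum>i<n. s i))\<^sup>2)"
    by (rule ravg_cong) (simp add: algebra_simps)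
  moreover have "ravg n (\<lambda>s. (c + (\<Sum>i<Suc n. (s(n := -1)) i))\<^sup>2) = ravg n (\<lambda>s. ((c - 1) + (\<Sum>i<n. s i))\<^sup>2)"
    by (rule ravg_cong) (simp add: algebra_simps)
  ultimately show ?case using Suc.IH[of "c+1"] Suc.IH[of "c - 1"]
    by (simp only: ravg.simps) (simp add: power2_eq_square algebra_simps)
qed

lemma ravg_abs_sum: "ravg n (\<lambda>s. \<bar>\<Sum>i<n. s i\<bar>) \<le> sqrt n"
proof (cases "n = 0")
  case True then show ?thesis by simp
next
  case False
  define r where "r = sqrt n"
  have sp: "r > 0" using False by (simp add: r_def)
  have rr: "r * r = n" unfolding r_def by simp
  have key: "\<And>s. \<bar>\<Sum>i<n. s i\<bar> \<le> (1 / (2 * r)) * (0 + (\<Sum>i<n. s i))\<^sup>2 + r / 2"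
  proof -
    fix s :: "nat \<Rightarrow> real"
    define S where "S = (\<Sum>i<n. s i)"
    have "0 \<le> (\<bar>S\<bar> - r)\<^sup>2" by simp
    hence "2 * \<bar>S\<bar> * r \<le> S\<^sup>2 + r * r" by (simp add: power2_eq_square algebra_simps)
    hence "\<bar>S\<bar> \<le> (S\<^sup>2 + r * r) / (2 * r)" using sp by (simp add: pos_le_divide_eq mult.commute mult.left_commute)
    also have "\<dots> = (1 / (2 * r)) * S\<^sup>2 + r / 2" using sp by (simp add: add_divide_distrib)
    finally show "\<bar>\<Sum>i<n. s i\<bar> \<le> (1 / (2 * r)) * (0 + (\<Sum>i<n. s i))\<^sup>2 + r / 2" by (simp add: S_def)
  qed
  have "ravg n (\<lambda>s. \<bar>\<Sum>i<n. s i\<bar>) \<le> ravg n (\<lambda>s. (1 / (2 * r)) * (0 + (\<Sum>i<n. s i))\<^sup>2 + r / 2)"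
    by (intro ravg_mono key)
  also have "\<dots> = (1 / (2 * r)) * ravg n (\<lambda>s. (0 + (\<Sum>i<n. s i))\<^sup>2) + r / 2"
    by (simp only: ravg_add ravg_cmult ravg_const)
  also have "\<dots> = (1 / (2 * r)) * (r * r) + r / 2" by (simp only: ravg_sq rr) simp
  also have "\<dots> = r" using sp by simp
  finally show ?thesis by (simp add: r_def)
qed

lemma ravg_avg: "ravg n (\<lambda>s. (F s + G s) / 2) = (ravg n F + ravg n G) / 2"
proof -
  have "ravg n (\<lambda>s. (F s + G s) / 2) = ravg n (\<lambda>s. (1/2) * F s + (1/2) * G s)"
    by (rule ravg_cong) simp
  also have "\<dots> = (ravg n F + ravg n G) / 2" by (simp only: ravg_add ravg_cmult) simp
  finally show ?thesis .
qed

lemma sup_key: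
  fixes W c :: "'t \<Rightarrow> real"
  assumes W: "\<And>t. \<bar>W t\<bar> \<le> B" and c: "\<And>t. \<bar>c t\<bar> \<le> C"
  shows "(SUP t. W t + \<bar>c t\<bar>) + (SUP t. W t - \<bar>c t\<bar>) \<le> (SUP t. W t + c t) + (SUP t. W t - c t)"
proof -
  have b1: "bdd_above (range (\<lambda>t. W t + c t))"
    by (rule bdd_aboveI2[where M="B + C"]) (use W c in \<open>smt (verit)\<close>)
  have b2: "bdd_above (range (\<lambda>t. W t - c t))"
    by (rule bdd_aboveI2[where M="B + C"]) (use W c in \<open>smt (verit)\<close>)
  have b3: "bdd_above (range (\<lambda>t. W t + \<bar>c t\<bar>))"
    by (rule bdd_aboveI2[where M="B + C"]) (use W c in \<open>smt (verit)\<close>)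
  let ?R = "(SUP t. W t + c t) + (SUP t. W t - c t)"
  have pt: "W u + \<bar>c u\<bar> \<le> ?R - (W v - \<bar>c v\<bar>)" for u v
  proof (cases "c u \<ge> c v")
    case True
    have "W u + c u \<le> (SUP t. W t + c t)" by (rule cSUP_upper[OF UNIV_I b1])
    moreover have "W v - c v \<le> (SUP t. W t - c t)" by (rule cSUP_upper[OF UNIV_I b2])
    ultimately show ?thesis using True by (auto simp: abs_if split: if_splits)
  next
    case False
    have "W v + c v \<le> (SUP t. W t + c t)" by (rule cSUP_upper[OF UNIV_I b1])
    moreover have "W u - c u \<le> (SUP t. W t - c t)" by (rule cSUP_upper[OF UNIV_I b2])
    ultimately show ?thesis using False by (auto simp: abs_if split: if_splits)
  qed
  have "(SUP t. W t + \<bar>c t\<bar>) \<le> ?R - (W v - \<bar>c v\<bar>)" for v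
    by (rule cSUP_least) (auto intro: pt)
  hence "W v - \<bar>c v\<bar> \<le> ?R - (SUP t. W t + \<bar>c t\<bar>)" for v by smt
  hence "(SUP t. W t - \<bar>c t\<bar>) \<le> ?R - (SUP t. W t + \<bar>c t\<bar>)"
    by (intro cSUP_least) auto
  thus ?thesis by simp
qed

lemma contraction:
  fixes a :: "nat \<Rightarrow> 't \<Rightarrow> real" and U :: "'t \<Rightarrow> real"
  assumes a: "\<And>i t. \<bar>a i t\<bar> \<le> 1" and U: "\<And>t. \<bar>U t\<bar> \<le> B"
  shows "ravg n (\<lambda>s. SUP t. U t + (\<Sum>i<n. s i * \<bar>a i t\<bar>)) \<le> ravg n (\<lambda>s. SUP t. U t + (\<Sum>i<n. s i * a i t))"
  using U
proof (induction n arbitrary: U B)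
  case 0
  then show ?case by simp
next
  case (Suc n)
  define W where "W s t = U t + (\<Sum>i<n. s i * a i t)" for s t
  have Wb: "pm1 n s \<Longrightarrow> \<bar>W s t\<bar> \<le> B + n" for s t
  proof -
    assume s: "pm1 n s"
    have "\<bar>\<Sum>i<n. s i * a i t\<bar> \<le> (\<Sum>i<n. \<bar>s i * a i t\<bar>)" by (rule sum_abs)
    also have "\<dots> \<le> (\<Sum>i<n. 1)"
    proof (rule sum_mono)
      fix i assume "i \<in> {..<n}"
      hence "\<bar>s i\<bar> = 1" using s by (auto simp: pm1_def)
      thus "\<bar>s i * a i t\<bar> \<le> 1" using a[of i t] by (simp add: abs_mult)
    qed
    finally show ?thesis using Suc.prems[of t] by (simp add: W_def)
  qed
  have L1: "ravg n (\<lambda>s. SUP t. U t + (\<Sum>i<Suc n. (s(n := 1)) i * \<bar>a i t\<bar>))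
      \<le> ravg n (\<lambda>s. SUP t. W s t + \<bar>a n t\<bar>)"
  proof -
    have "ravg n (\<lambda>s. SUP t. U t + (\<Sum>i<Suc n. (s(n := 1)) i * \<bar>a i t\<bar>))
        = ravg n (\<lambda>s. SUP t. (U t + \<bar>a n t\<bar>) + (\<Sum>i<n. s i * \<bar>a i t\<bar>))"
      by (rule ravg_cong) (simp add: algebra_simps)
    also have "\<dots> \<le> ravg n (\<lambda>s. SUP t. (U t + \<bar>a n t\<bar>) + (\<Sum>i<n. s i * a i t))"
      by (rule Suc.IH[where B="B+1"]) (use Suc.prems a in \<open>force intro: order.trans[OF abs_triangle_ineq] add_mono\<close>)
    also have "\<dots> = ravg n (\<lambda>s. SUP t. W s t + \<bar>a n t\<bar>)"
      by (rule ravg_cong) (simp add: W_def algebra_simps)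
    finally show ?thesis .
  qed
  have L2: "ravg n (\<lambda>s. SUP t. U t + (\<Sum>i<Suc n. (s(n := -1)) i * \<bar>a i t\<bar>))
      \<le> ravg n (\<lambda>s. SUP t. W s t - \<bar>a n t\<bar>)"
  proof -
    have "ravg n (\<lambda>s. SUP t. U t + (\<Sum>i<Suc n. (s(n := -1)) i * \<bar>a i t\<bar>))
        = ravg n (\<lambda>s. SUP t. (U t - \<bar>a n t\<bar>) + (\<Sum>i<n. s i * \<bar>a i t\<bar>))"
      by (rule ravg_cong) (simp add: algebra_simps)
    also have "\<dots> \<le> ravg n (\<lambda>s. SUP t. (U t - \<bar>a n t\<bar>) + (\<Sum>i<n. s i * a i t))"
      by (rule Suc.IH[where B="B+1"]) (use Suc.prems a in \<open>force intro: order.trans[OF abs_triangle_ineq4] add_mono\<close>)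
    also have "\<dots> = ravg n (\<lambda>s. SUP t. W s t - \<bar>a n t\<bar>)"
      by (rule ravg_cong) (simp add: W_def algebra_simps)
    finally show ?thesis .
  qed
  have R1: "ravg n (\<lambda>s. SUP t. U t + (\<Sum>i<Suc n. (s(n := 1)) i * a i t))
      = ravg n (\<lambda>s. SUP t. W s t + a n t)"
    by (rule ravg_cong) (simp add: W_def algebra_simps)
  have R2: "ravg n (\<lambda>s. SUP t. U t + (\<Sum>i<Suc n. (s(n := -1)) i * a i t))
      = ravg n (\<lambda>s. SUP t. W s t - a n t)"
    by (rule ravg_cong) (simp add: W_def algebra_simps)
  have M: "ravg n (\<lambda>s. ((SUP t. W s t + \<bar>a n t\<bar>) + (SUP t. W s t - \<bar>a n t\<bar>)) / 2)
      \<le> ravg n (\<lambda>s. ((SUP t. W s t + a n t) + (SUP t. W s t - a n t)) / 2)"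
  proof (rule ravg_mono)
    fix s assume "pm1 n s"
    thus "((SUP t. W s t + \<bar>a n t\<bar>) + (SUP t. W s t - \<bar>a n t\<bar>)) / 2
      \<le> ((SUP t. W s t + a n t) + (SUP t. W s t - a n t)) / 2"
      using sup_key[of "W s" "B + n" "a n" 1] Wb a by simp
  qed
  have M': "(ravg n (\<lambda>s. SUP t. W s t + \<bar>a n t\<bar>) + ravg n (\<lambda>s. SUP t. W s t - \<bar>a n t\<bar>)) / 2
      \<le> (ravg n (\<lambda>s. SUP t. W s t + a n t) + ravg n (\<lambda>s. SUP t. W s t - a n t)) / 2"
    using M by (simp only: ravg_avg)
  show ?case
    unfolding ravg.simps R1 R2 using L1 L2 M' by argo
qed



locale bsd =
  fixes \<mu> :: "(nat \<Rightarrow> bool) measure"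
  assumes bd: "binseq_distr \<mu>"
begin

lemma prob: "prob_space \<mu>" using bd by (simp add: binseq_distr_def)

lemma sets_mu: "sets \<mu> = sets (\<Pi>\<^sub>M i\<in>(UNIV::nat set). count_space (UNIV::bool set))"
  using bd by (simp add: binseq_distr_def)

lemma space_mu[simp]: "space \<mu> = UNIV"
  using sets_eq_imp_space_eq[OF sets_mu] by (simp add: space_PiM)

lemma meas_coord[measurable]: "(\<lambda>\<omega>. \<omega> j) \<in> measurable \<mu> (count_space UNIV)"
  unfolding measurable_cong_sets[OF sets_mu refl] by measurable

abbreviation PN :: "nat \<Rightarrow> (nat \<Rightarrow> nat \<Rightarrow> bool) measure" where
  "PN n \<equiv> PiM {..<n} (\<lambda>_. \<mu>)"

lemma prob_PN: "prob_space (PN n)"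
  by (rule prob_space_PiM) (simp add: prob)

lemma measure_PN_space[simp]: "measure (PN n) (space (PN n)) = 1"
  using prob_space.prob_space[OF prob_PN] .

lemma meas_xij[measurable]: "i < n \<Longrightarrow> (\<lambda>x. x i j) \<in> measurable (PN n) (count_space UNIV)"
  by measurable

lemma meas_fb[measurable]: "i < n \<Longrightarrow> (\<lambda>x. of_bool (x i j) :: real) \<in> borel_measurable (PN n)"
  by measurable

lemma meas_test: "(\<lambda>x. (\<Sum>i<n. of_bool (x i j) * (c::real))) \<in> borel_measurable (PN n)"
  by measurable


lemma psf: "product_sigma_finite (\<lambda>_. \<mu>)"
  unfolding product_sigma_finite_def using prob by (simp add: prob_space_imp_sigma_finite)

lemma sf_PN: "sigma_finite_measure (PN n)"
  using prob_PN prob_space_imp_sigma_finite by blast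

definition pm :: "nat \<Rightarrow> (nat \<Rightarrow> nat \<Rightarrow> bool) \<Rightarrow> (nat \<Rightarrow> nat \<Rightarrow> bool) \<times> (nat \<Rightarrow> nat \<Rightarrow> bool)" where
  "pm N \<omega> = ((\<lambda>i\<in>{..<N}. \<omega> i), (\<lambda>i\<in>{..<N}. \<omega> (N + i)))"

lemma meas_pm[measurable]: "pm N \<in> measurable (PiM {..<2*N} (\<lambda>_. \<mu>)) (PN N \<Otimes>\<^sub>M PN N)"
  unfolding pm_def by measurable

lemma L_pm: "distr (PiM {..<2*N} (\<lambda>_. \<mu>)) (PN N \<Otimes>\<^sub>M PN N) (pm N) = PN N \<Otimes>\<^sub>M PN N"
proof (rule pair_measure_eqI[symmetric])
  show "sigma_finite_measure (PN N)" by (rule sf_PN)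
  show "sigma_finite_measure (PN N)" by (rule sf_PN)
  show "sets (PN N \<Otimes>\<^sub>M PN N) = sets (distr (PiM {..<2*N} (\<lambda>_. \<mu>)) (PN N \<Otimes>\<^sub>M PN N) (pm N))" by simp
  fix A B assume A: "A \<in> sets (PN N)" and B: "B \<in> sets (PN N)"
  let ?I = "{..<N}" and ?J = "{N..<2*N}"
  interpret P: product_sigma_finite "\<lambda>_. \<mu>" by (rule psf)
  interpret PJ: pair_sigma_finite "PiM ?I (\<lambda>_. \<mu>)" "PiM ?J (\<lambda>_. \<mu>)"
    by (intro pair_sigma_finite.intro sf_PN) (rule prob_space_imp_sigma_finite, rule prob_space_PiM, rule prob)
  have IJ: "{..<2*N} = ?I \<union> ?J" by auto
  define sh where "sh = (\<lambda>y::nat \<Rightarrow> nat \<Rightarrow> bool. \<lambda>i\<in>{..<N}. y (N + i))"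
  have sh_meas[measurable]: "sh \<in> measurable (PiM ?J (\<lambda>_. \<mu>)) (PN N)"
    unfolding sh_def by measurable
  have dsh: "distr (PiM ?J (\<lambda>_. \<mu>)) (PN N) sh = PN N"
    unfolding sh_def
    by (rule distr_PiM_reindex) (auto simp: prob inj_on_def)
  have Asp: "A \<subseteq> space (PN N)" using A sets.sets_into_space by blast
  have pre: "merge ?I ?J -` (pm N -` (A \<times> B) \<inter> space (PiM {..<2*N} (\<lambda>_. \<mu>))) \<inter> space (PiM ?I (\<lambda>_. \<mu>) \<Otimes>\<^sub>M PiM ?J (\<lambda>_. \<mu>))
      = A \<times> (sh -` B \<inter> space (PiM ?J (\<lambda>_. \<mu>)))"
  proof -
    have e1: "(\<lambda>i\<in>?I. merge ?I ?J (x, y) i) = x" if "x \<in> space (PN N)" for x y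
      using that by (auto simp: merge_def space_PiM fun_eq_iff PiE_def extensional_def)
    have e2: "(\<lambda>i\<in>?I. merge ?I ?J (x, y) (N + i)) = sh y" for x y
      by (auto simp: merge_def sh_def fun_eq_iff)
    have key: "pm N (merge ?I ?J (x, y)) = (x, sh y)" if "x \<in> space (PN N)" for x y
      unfolding pm_def using e1[OF that] e2 by simp
    have msp: "merge ?I ?J z \<in> space (PiM {..<2*N} (\<lambda>_. \<mu>))"
      if "z \<in> space (PiM ?I (\<lambda>_. \<mu>) \<Otimes>\<^sub>M PiM ?J (\<lambda>_. \<mu>))" for z
      using measurable_space[OF measurable_merge that] by (simp add: IJ)
    show ?thesis
    proof (intro set_eqI iffI)
      fix z assume z: "z \<in> merge ?I ?J -` (pm N -` (A \<times> B) \<inter> space (PiM {..<2*N} (\<lambda>_. \<mu>))) \<inter> space (PiM ?I (\<lambda>_. \<mu>) \<Otimes>\<^sub>M PiM ?J (\<lambda>_. \<mu>))"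
      obtain x y where zxy: "z = (x, y)" by (cases z)
      have xs: "x \<in> space (PN N)" and ys: "y \<in> space (PiM ?J (\<lambda>_. \<mu>))" using z zxy by (auto simp: space_pair_measure)
      show "z \<in> A \<times> (sh -` B \<inter> space (PiM ?J (\<lambda>_. \<mu>)))"
        using z key[OF xs, of y] ys by (auto simp: zxy)
    next
      fix z assume z: "z \<in> A \<times> (sh -` B \<inter> space (PiM ?J (\<lambda>_. \<mu>)))"
      obtain x y where zxy: "z = (x, y)" by (cases z)
      have xs: "x \<in> space (PN N)" and ys: "y \<in> space (PiM ?J (\<lambda>_. \<mu>))" using z zxy Asp by auto
      have zs: "z \<in> space (PiM ?I (\<lambda>_. \<mu>) \<Otimes>\<^sub>M PiM ?J (\<lambda>_. \<mu>))" using xs ys zxy by (simp add: space_pair_measure)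
      show "z \<in> merge ?I ?J -` (pm N -` (A \<times> B) \<inter> space (PiM {..<2*N} (\<lambda>_. \<mu>))) \<inter> space (PiM ?I (\<lambda>_. \<mu>) \<Otimes>\<^sub>M PiM ?J (\<lambda>_. \<mu>))"
        using z key[OF xs, of y] zs msp[OF zs] by (auto simp: zxy)
    qed
  qed
  have "emeasure (distr (PiM {..<2*N} (\<lambda>_. \<mu>)) (PN N \<Otimes>\<^sub>M PN N) (pm N)) (A \<times> B)
      = emeasure (PiM {..<2*N} (\<lambda>_. \<mu>)) (pm N -` (A \<times> B) \<inter> space (PiM {..<2*N} (\<lambda>_. \<mu>)))"
    using A B by (intro emeasure_distr) auto
  also have "\<dots> = emeasure (distr (PiM ?I (\<lambda>_. \<mu>) \<Otimes>\<^sub>M PiM ?J (\<lambda>_. \<mu>)) (PiM (?I \<union> ?J) (\<lambda>_. \<mu>)) (merge ?I ?J))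
        (pm N -` (A \<times> B) \<inter> space (PiM {..<2*N} (\<lambda>_. \<mu>)))"
    by (subst P.distr_merge) (auto simp: IJ)
  also have "\<dots> = emeasure (PiM ?I (\<lambda>_. \<mu>) \<Otimes>\<^sub>M PiM ?J (\<lambda>_. \<mu>))
        (merge ?I ?J -` (pm N -` (A \<times> B) \<inter> space (PiM {..<2*N} (\<lambda>_. \<mu>))) \<inter> space (PiM ?I (\<lambda>_. \<mu>) \<Otimes>\<^sub>M PiM ?J (\<lambda>_. \<mu>)))"
    using A B measurable_merge[of ?I ?J "\<lambda>_. \<mu>"] by (intro emeasure_distr) (auto simp: IJ[symmetric])
  also have "\<dots> = emeasure (PiM ?I (\<lambda>_. \<mu>) \<Otimes>\<^sub>M PiM ?J (\<lambda>_. \<mu>)) (A \<times> (sh -` B \<inter> space (PiM ?J (\<lambda>_. \<mu>))))"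
    by (simp only: pre)
  also have "\<dots> = emeasure (PN N) A * emeasure (PiM ?J (\<lambda>_. \<mu>)) (sh -` B \<inter> space (PiM ?J (\<lambda>_. \<mu>)))"
    using A B by (intro sigma_finite_measure.emeasure_pair_measure_Times prob_space_imp_sigma_finite prob_space_PiM prob measurable_sets[OF sh_meas]) auto
  also have "emeasure (PiM ?J (\<lambda>_. \<mu>)) (sh -` B \<inter> space (PiM ?J (\<lambda>_. \<mu>))) = emeasure (PN N) B"
    using B by (subst emeasure_distr[symmetric]) (auto simp: dsh)
  finally show "emeasure (PN N) A * emeasure (PN N) B = emeasure (distr (PiM {..<2*N} (\<lambda>_. \<mu>)) (PN N \<Otimes>\<^sub>M PN N) (pm N)) (A \<times> B)"
    by simp
qed


definition perm :: "nat \<Rightarrow> (nat \<Rightarrow> real) \<Rightarrow> nat \<Rightarrow> nat" where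
  "perm N s n = (if n < N then (if s n < 0 then N + n else n)
     else if n < 2*N then (if s (n - N) < 0 then n - N else n) else n)"

lemma perm_lt: "n < 2*N \<Longrightarrow> perm N s n < 2*N"
  by (auto simp: perm_def)

lemma perm_perm: "n < 2*N \<Longrightarrow> perm N s (perm N s n) = n"
  by (auto simp: perm_def)

lemma inj_perm: "inj_on (perm N s) {..<2*N}"
  by (rule inj_onI) (metis lessThan_iff perm_perm)

definition sw :: "nat \<Rightarrow> (nat \<Rightarrow> real) \<Rightarrow> (nat \<Rightarrow> nat \<Rightarrow> bool) \<times> (nat \<Rightarrow> nat \<Rightarrow> bool) \<Rightarrow> (nat \<Rightarrow> nat \<Rightarrow> bool) \<times> (nat \<Rightarrow> nat \<Rightarrow> bool)" where
  "sw N s z = ((\<lambda>i\<in>{..<N}. if s i < 0 then snd z i else fst z i), (\<lambda>i\<in>{..<N}. if s i < 0 then fst z i else snd z i))"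

lemma meas_sw[measurable]: "sw N s \<in> measurable (PN N \<Otimes>\<^sub>M PN N) (PN N \<Otimes>\<^sub>M PN N)"
  unfolding sw_def by measurable

lemma swap_inv: "distr (PN N \<Otimes>\<^sub>M PN N) (PN N \<Otimes>\<^sub>M PN N) (sw N s) = PN N \<Otimes>\<^sub>M PN N"
proof -
  let ?P2 = "PiM {..<2*N} (\<lambda>_. \<mu>)"
  define r where "r = (\<lambda>\<omega>::nat \<Rightarrow> nat \<Rightarrow> bool. \<lambda>n\<in>{..<2*N}. \<omega> (perm N s n))"
  have mr[measurable]: "r \<in> measurable ?P2 ?P2"
    unfolding r_def by (intro measurable_restrict measurable_component_singleton) (auto simp: perm_lt)
  have dr: "distr ?P2 ?P2 r = ?P2"
    unfolding r_def using distr_PiM_reindex[of "{..<2*N}" "\<lambda>_. \<mu>" "perm N s" "{..<2*N}"]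
    by (auto simp: prob inj_perm perm_lt)
  have eq: "sw N s (pm N \<omega>) = pm N (r \<omega>)" for \<omega>
    by (auto simp: sw_def pm_def r_def perm_def fun_eq_iff)
  have "distr (PN N \<Otimes>\<^sub>M PN N) (PN N \<Otimes>\<^sub>M PN N) (sw N s)
      = distr (distr ?P2 (PN N \<Otimes>\<^sub>M PN N) (pm N)) (PN N \<Otimes>\<^sub>M PN N) (sw N s)"
    by (simp only: L_pm)
  also have "\<dots> = distr ?P2 (PN N \<Otimes>\<^sub>M PN N) (sw N s \<circ> pm N)"
    by (rule distr_distr) measurable
  also have "\<dots> = distr ?P2 (PN N \<Otimes>\<^sub>M PN N) (pm N \<circ> r)"
    by (rule distr_cong) (auto simp: eq)
  also have "\<dots> = distr (distr ?P2 ?P2 r) (PN N \<Otimes>\<^sub>M PN N) (pm N)"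
    by (rule distr_distr[symmetric]) measurable
  also have "\<dots> = PN N \<Otimes>\<^sub>M PN N" by (simp only: dr L_pm)
  finally show ?thesis .
qed

lemma integral_sw:
  fixes f :: "_ \<Rightarrow> real"
  assumes [measurable]: "f \<in> borel_measurable (PN N \<Otimes>\<^sub>M PN N)"
  shows "integral\<^sup>L (PN N \<Otimes>\<^sub>M PN N) f = (\<integral>z. f (sw N s z) \<partial>(PN N \<Otimes>\<^sub>M PN N))"
proof -
  have "integral\<^sup>L (PN N \<Otimes>\<^sub>M PN N) f = integral\<^sup>L (distr (PN N \<Otimes>\<^sub>M PN N) (PN N \<Otimes>\<^sub>M PN N) (sw N s)) f"
    by (simp only: swap_inv)
  also have "\<dots> = (\<integral>z. f (sw N s z) \<partial>(PN N \<Otimes>\<^sub>M PN N))"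
    by (rule integral_distr) measurable
  finally show ?thesis .
qed


lemma intb:
  fixes f :: "_ \<Rightarrow> real"
  assumes "finite_measure M" "f \<in> borel_measurable M" "\<And>x. x \<in> space M \<Longrightarrow> \<bar>f x\<bar> \<le> C"
  shows "integrable M f"
  using assms by (intro finite_measure.integrable_const_bound[where B=C]) auto

lemma fm_PN: "finite_measure (PN n)"
  using prob_PN prob_space.finite_measure by blast

lemma pps_M2: "pair_prob_space (PN n) (PN n)"
  by (simp add: pair_prob_space.intro pair_sigma_finite.intro prob_PN prob_space_imp_sigma_finite sf_PN)

lemma prob_M2: "prob_space (PN n \<Otimes>\<^sub>M PN n)"
  by (rule prob_space_pair) (rule prob_PN)+

lemma fm_M2: "finite_measure (PN n \<Otimes>\<^sub>M PN n)"
  using prob_M2 prob_space.finite_measure by blast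

lemma sup_abs_bound:
  fixes f :: "'t \<Rightarrow> real"
  assumes "\<And>t. \<bar>f t\<bar> \<le> C"
  shows "\<bar>SUP t. f t\<bar> \<le> C"
proof -
  have bdd: "bdd_above (range f)" using assms by (intro bdd_aboveI2[where M=C]) (smt (verit))
  have "(SUP t. f t) \<le> C" using assms by (intro cSUP_least) (auto simp: abs_le_iff)
  moreover have "f undefined \<le> (SUP t. f t)" by (rule cSUP_upper[OF UNIV_I bdd])
  ultimately show ?thesis using assms[of undefined] by (auto simp: abs_le_iff)
qed

lemma bdd_abs: "(\<And>t. \<bar>f t\<bar> \<le> (C::real)) \<Longrightarrow> bdd_above (range f)"
  by (intro bdd_aboveI2[where M=C]) (smt (verit))

lemma sum_s_bound:
  fixes g :: "nat \<Rightarrow> real"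
  assumes "\<And>i. \<bar>g i\<bar> \<le> 1"
  shows "\<bar>\<Sum>i<n. s i * g i\<bar> \<le> (\<Sum>i<n. \<bar>s i\<bar>)"
proof -
  have "\<bar>\<Sum>i<n. s i * g i\<bar> \<le> (\<Sum>i<n. \<bar>s i * g i\<bar>)" by (rule sum_abs)
  also have "\<dots> \<le> (\<Sum>i<n. \<bar>s i\<bar>)"
    by (rule sum_mono) (use assms in \<open>auto simp: abs_mult intro: mult_left_le\<close>)
  finally show ?thesis .
qed

lemma pm1_sum: "pm1 n s \<Longrightarrow> (\<Sum>i<n. \<bar>s i\<bar>) = n"
proof -
  assume "pm1 n s"
  hence "(\<Sum>i<n. \<bar>s i\<bar>) = (\<Sum>i<n. (1::real))"
    by (intro sum.cong) (auto simp: pm1_def)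
  thus ?thesis by simp
qed

lemma of_bool_neq: "(of_bool (a \<noteq> b) :: real) = \<bar>of_bool a - of_bool b\<bar>"
  by auto

lemma int_comp:
  fixes g :: "_ \<Rightarrow> real"
  assumes "i < n" and [measurable]: "g \<in> borel_measurable \<mu>"
  shows "(\<integral>x. g (x i) \<partial>PN n) = integral\<^sup>L \<mu> g"
proof -
  have "integral\<^sup>L \<mu> g = integral\<^sup>L (distr (PN n) \<mu> (\<lambda>x. x i)) g"
    using assms by (subst distr_PiM_component) (auto simp: prob)
  also have "\<dots> = (\<integral>x. g (x i) \<partial>PN n)"
    using assms by (intro integral_distr) auto
  finally show ?thesis by simp
qed

definition pp :: "nat \<Rightarrow> real" where "pp j = measure \<mu> {x \<in> space \<mu>. x j}"

lemma int_pp: "(\<integral>\<omega>. of_bool (\<omega> j) \<partial>\<mu>) = pp j"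
proof -
  have "(\<lambda>\<omega>::nat\<Rightarrow>bool. of_bool (\<omega> j) :: real) = indicator {\<omega>. \<omega> j}"
    by (auto simp: fun_eq_iff indicator_def)
  thus ?thesis by (simp add: pp_def)
qed

lemma int_xi: "(\<integral>\<omega>. of_bool (\<omega> j \<noteq> \<omega> k) \<partial>\<mu>) = xi \<mu> j k"
proof -
  have "(\<lambda>\<omega>::nat\<Rightarrow>bool. of_bool (\<omega> j \<noteq> \<omega> k) :: real) = indicator {\<omega>. \<omega> j \<noteq> \<omega> k}"
    by (auto simp: fun_eq_iff indicator_def)
  thus ?thesis by (simp add: xi_def)
qed

lemma pp_bound: "0 \<le> pp j" "pp j \<le> 1"
  using prob_space.prob_le_1[OF prob] by (auto simp: pp_def)

lemma xi_bound: "0 \<le> xi \<mu> j k" "xi \<mu> j k \<le> 1"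
  using prob_space.prob_le_1[OF prob] by (auto simp: xi_def)


definition Aavg :: "nat \<Rightarrow> nat \<times> nat \<Rightarrow> (nat \<Rightarrow> nat \<Rightarrow> bool) \<Rightarrow> real" where
  "Aavg N t x = (\<Sum>i<N. of_bool (x i (fst t) \<noteq> x i (snd t))) / real N"

definition Gf :: "nat \<Rightarrow> (nat \<Rightarrow> nat \<Rightarrow> bool) \<Rightarrow> real" where
  "Gf N x = (SUP t. xi \<mu> (fst t) (snd t) - Aavg N t x)"

definition Df :: "nat \<Rightarrow> (nat \<Rightarrow> nat \<Rightarrow> bool) \<times> (nat \<Rightarrow> nat \<Rightarrow> bool) \<Rightarrow> real" where
  "Df N z = (SUP t. Aavg N t (snd z) - Aavg N t (fst z))"

definition Vf :: "nat \<Rightarrow> (nat \<Rightarrow> real) \<Rightarrow> (nat \<Rightarrow> nat \<Rightarrow> bool) \<Rightarrow> real" where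
  "Vf N s x = (SUP t::nat\<times>nat. \<Sum>i<N. s i * of_bool (x i (fst t) \<noteq> x i (snd t)))"

definition Lf :: "nat \<Rightarrow> (nat \<Rightarrow> real) \<Rightarrow> (nat \<Rightarrow> nat \<Rightarrow> bool) \<Rightarrow> real" where
  "Lf N s x = (SUP t::nat\<times>nat. \<Sum>i<N. s i * (of_bool (x i (fst t)) - of_bool (x i (snd t))))"

definition Bf :: "nat \<Rightarrow> (nat \<Rightarrow> real) \<Rightarrow> (nat \<Rightarrow> nat \<Rightarrow> bool) \<Rightarrow> real" where
  "Bf N s x = (SUP j. \<Sum>i<N. s i * (of_bool (x i j) - pp j))"

definition Ef :: "nat \<Rightarrow> (nat \<Rightarrow> real) \<Rightarrow> (nat \<Rightarrow> nat \<Rightarrow> bool) \<times> (nat \<Rightarrow> nat \<Rightarrow> bool) \<Rightarrow> real" where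
  "Ef N s z = (SUP j. \<Sum>i<N. s i * (of_bool (fst z i j) - of_bool (snd z i j)))"

definition Dl :: "nat \<Rightarrow> (nat \<Rightarrow> nat \<Rightarrow> bool) \<Rightarrow> real" where
  "Dl N x = (SUP j. \<bar>(\<Sum>i<N. of_bool (x i j)) / real N - pp j\<bar>)"

lemma Delta_eq: "Delta N \<mu> = integral\<^sup>L (PN N) (Dl N)"
  unfolding Delta_def Dl_def[abs_def] pp_def by (rule refl)

lemma avg_bound:
  fixes g :: "nat \<Rightarrow> bool"
  shows "0 \<le> (\<Sum>i<N. of_bool (g i)) / real N" "(\<Sum>i<N. of_bool (g i)) / real N \<le> (1::real)"
proof -
  have "(\<Sum>i<N. of_bool (g i) :: real) \<le> (\<Sum>i<N. 1)" by (rule sum_mono) auto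
  hence le: "(\<Sum>i<N. of_bool (g i) :: real) \<le> N" by simp
  show "0 \<le> (\<Sum>i<N. of_bool (g i)) / real N" by (simp add: sum_nonneg)
  show "(\<Sum>i<N. of_bool (g i)) / real N \<le> (1::real)"
    using le by (cases "N = 0") (auto simp: divide_le_eq)
qed

lemma avg_pp_abs: "\<bar>(\<Sum>i<N. of_bool (g i)) / real N - pp j\<bar> \<le> 1"
  using avg_bound[of g N] pp_bound[of j] unfolding abs_le_iff by linarith

lemma Aavg_bound: "0 \<le> Aavg N t x" "Aavg N t x \<le> 1"
  unfolding Aavg_def by (rule avg_bound)+

lemma abs_ob: "\<bar>(of_bool a :: real) - of_bool b\<bar> \<le> 1" by auto

lemma abs_obp: "\<bar>(of_bool a :: real) - pp j\<bar> \<le> 1" using pp_bound[of j] by auto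

lemma cover_inf:
  assumes "covering_number \<mu> \<epsilon> = \<infinity>" "finite S"
  shows "\<exists>i. \<forall>s\<in>S. xi \<mu> i s > \<epsilon>"
proof (rule ccontr)
  assume "\<not> ?thesis"
  hence cov: "\<forall>i. \<exists>s\<in>S. xi \<mu> i s \<le> \<epsilon>" by (auto simp: not_less)
  hence "enat (card S) \<in> (\<lambda>S. if finite S then enat (card S) else \<infinity>) ` {S :: nat set. \<forall>i. \<exists>s\<in>S. xi \<mu> i s \<le> \<epsilon>}"
    using assms(2) by (auto intro!: image_eqI[where x=S])
  hence "covering_number \<mu> \<epsilon> \<le> enat (card S)"
    unfolding covering_number_def by (rule Inf_lower)
  thus False using assms(1) by simp
qed

lemma Gf_gt:
  assumes cov: "covering_number \<mu> \<epsilon> = \<infinity>"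
  shows "Gf N x > \<epsilon>"
proof -
  define pat where "pat j = (\<lambda>i\<in>{..<N}. x i j)" for j
  define rep where "rep v = (SOME j. pat j = v)" for v
  have fin: "finite (range pat)"
  proof (rule finite_subset)
    show "range pat \<subseteq> PiE {..<N} (\<lambda>_. UNIV)" by (auto simp: pat_def)
    show "finite (PiE {..<N} (\<lambda>_. UNIV :: bool set))" by (rule finite_PiE) auto
  qed
  obtain i where i: "\<forall>s\<in>rep ` range pat. xi \<mu> i s > \<epsilon>"
    using cover_inf[OF cov finite_imageI[OF fin]] by blast
  define k where "k = rep (pat i)"
  have "pat k = pat i" unfolding k_def rep_def by (rule someI_ex) auto
  hence xk: "x l k = x l i" if "l < N" for l
    using that unfolding pat_def by (metis lessThan_iff restrict_apply')
  have A0: "Aavg N (i, k) x = 0" unfolding Aavg_def using xk by simp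
  have gt: "xi \<mu> i k > \<epsilon>" using i unfolding k_def by auto
  have bdd: "bdd_above (range (\<lambda>t. xi \<mu> (fst t) (snd t) - Aavg N t x))"
    by (rule bdd_aboveI2[where M=1]) (use xi_bound Aavg_bound in \<open>smt (verit)\<close>)
  have "xi \<mu> (fst (i,k)) (snd (i,k)) - Aavg N (i,k) x \<le> Gf N x"
    unfolding Gf_def by (rule cSUP_upper[OF UNIV_I bdd])
  thus ?thesis using A0 gt by simp
qed

lemma Df_sw:
  assumes s: "pm1 N s"
  shows "Df N (sw N s (x, y)) \<le> (Vf N s y + Vf N (\<lambda>i. - s i) x) / real N"
  unfolding Df_def
proof (rule cSUP_least)
  fix t :: "nat \<times> nat"
  let ?h = "\<lambda>w::nat\<Rightarrow>bool. of_bool (w (fst t) \<noteq> w (snd t)) :: real"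
  have b1: "bdd_above (range (\<lambda>t::nat\<times>nat. \<Sum>i<N. s i * of_bool (y i (fst t) \<noteq> y i (snd t))))"
    by (rule bdd_abs[where C="\<Sum>i<N. \<bar>s i\<bar>"], rule sum_s_bound) auto
  have b2: "bdd_above (range (\<lambda>t::nat\<times>nat. \<Sum>i<N. - s i * of_bool (x i (fst t) \<noteq> x i (snd t))))"
    by (rule bdd_abs[where C="\<Sum>i<N. \<bar>- s i\<bar>"], rule sum_s_bound) auto
  have eq: "Aavg N t (snd (sw N s (x, y))) - Aavg N t (fst (sw N s (x, y)))
      = ((\<Sum>i<N. s i * ?h (y i)) + (\<Sum>i<N. - s i * ?h (x i))) / real N"
  proof -
    have "(\<Sum>i<N. ?h (snd (sw N s (x, y)) i)) - (\<Sum>i<N. ?h (fst (sw N s (x, y)) i))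
        = (\<Sum>i<N. ?h (snd (sw N s (x, y)) i) - ?h (fst (sw N s (x, y)) i))"
      by (rule sum_subtractf[symmetric])
    also have "\<dots> = (\<Sum>i<N. s i * ?h (y i) + - s i * ?h (x i))"
    proof (rule sum.cong[OF refl])
      fix i assume "i \<in> {..<N}"
      hence "s i = 1 \<or> s i = -1" using s by (auto simp: pm1_def)
      thus "?h (snd (sw N s (x, y)) i) - ?h (fst (sw N s (x, y)) i) = s i * ?h (y i) + - s i * ?h (x i)"
        using \<open>i \<in> {..<N}\<close> by (auto simp: sw_def)
    qed
    also have "\<dots> = (\<Sum>i<N. s i * ?h (y i)) + (\<Sum>i<N. - s i * ?h (x i))"
      by (rule sum.distrib)
    finally have c: "(\<Sum>i<N. ?h (snd (sw N s (x, y)) i)) - (\<Sum>i<N. ?h (fst (sw N s (x, y)) i))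
        = (\<Sum>i<N. s i * ?h (y i)) + (\<Sum>i<N. - s i * ?h (x i))" .
    show ?thesis unfolding Aavg_def diff_divide_distrib[symmetric] c ..
  qed
  have "(\<Sum>i<N. s i * ?h (y i)) \<le> Vf N s y"
    unfolding Vf_def by (rule cSUP_upper[OF UNIV_I b1])
  moreover have "(\<Sum>i<N. - s i * ?h (x i)) \<le> Vf N (\<lambda>i. - s i) x"
    unfolding Vf_def by (rule cSUP_upper[OF UNIV_I b2])
  ultimately show "Aavg N t (snd (sw N s (x, y))) - Aavg N t (fst (sw N s (x, y))) \<le> (Vf N s y + Vf N (\<lambda>i. - s i) x) / real N"
    unfolding eq by (intro divide_right_mono) auto
qed simp

lemma V_L: "ravg N (\<lambda>s. Vf N s x) \<le> ravg N (\<lambda>s. Lf N s x)"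
proof -
  define a where "a i t = (of_bool (x i (fst t)) - of_bool (x i (snd t)) :: real)" for i and t :: "nat \<times> nat"
  have "ravg N (\<lambda>s. Vf N s x) = ravg N (\<lambda>s. SUP t. 0 + (\<Sum>i<N. s i * \<bar>a i t\<bar>))"
    unfolding Vf_def a_def by (simp only: of_bool_neq add_0_left)
  also have "\<dots> \<le> ravg N (\<lambda>s. SUP t. 0 + (\<Sum>i<N. s i * a i t))"
    by (rule contraction[where B=0]) (auto simp: a_def)
  also have "\<dots> = ravg N (\<lambda>s. Lf N s x)" unfolding Lf_def a_def by simp
  finally show ?thesis .
qed

lemma L_B: "Lf N s x \<le> Bf N s x + Bf N (\<lambda>i. - s i) x + \<bar>\<Sum>i<N. s i\<bar>"
  unfolding Lf_def
proof (rule cSUP_least)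
  fix t :: "nat \<times> nat"
  obtain j k where t: "t = (j, k)" by (cases t)
  have b1: "bdd_above (range (\<lambda>j. \<Sum>i<N. s i * (of_bool (x i j) - pp j)))"
    by (rule bdd_abs[where C="\<Sum>i<N. \<bar>s i\<bar>"], rule sum_s_bound, rule abs_obp)
  have b2: "bdd_above (range (\<lambda>j. \<Sum>i<N. - s i * (of_bool (x i j) - pp j)))"
    by (rule bdd_abs[where C="\<Sum>i<N. \<bar>- s i\<bar>"], rule sum_s_bound, rule abs_obp)
  have "(\<Sum>i<N. s i * (of_bool (x i j) - pp j)) \<le> Bf N s x"
    unfolding Bf_def by (rule cSUP_upper[OF UNIV_I b1])
  moreover have "(\<Sum>i<N. - s i * (of_bool (x i k) - pp k)) \<le> Bf N (\<lambda>i. - s i) x"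
    unfolding Bf_def by (rule cSUP_upper[OF UNIV_I b2])
  moreover have "(pp j - pp k) * (\<Sum>i<N. s i) \<le> \<bar>\<Sum>i<N. s i\<bar>"
  proof -
    have "\<bar>pp j - pp k\<bar> \<le> 1" using pp_bound[of j] pp_bound[of k] by auto
    hence "\<bar>(pp j - pp k) * (\<Sum>i<N. s i)\<bar> \<le> \<bar>\<Sum>i<N. s i\<bar>"
      by (simp add: abs_mult mult_left_le_one_le)
    thus ?thesis by linarith
  qed
  moreover have "(\<Sum>i<N. s i * (of_bool (x i j) - of_bool (x i k)))
     = (\<Sum>i<N. s i * (of_bool (x i j) - pp j)) + (\<Sum>i<N. - s i * (of_bool (x i k) - pp k)) + (pp j - pp k) * (\<Sum>i<N. s i)"
    by (simp add: sum.distrib[symmetric] sum_distrib_left algebra_simps)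
  ultimately show "(\<Sum>i<N. s i * (of_bool (x i (fst t)) - of_bool (x i (snd t)))) \<le> Bf N s x + Bf N (\<lambda>i. - s i) x + \<bar>\<Sum>i<N. s i\<bar>"
    unfolding t by simp
qed simp

lemma Ef_sw:
  assumes s: "pm1 N s"
  shows "Ef N s (sw N s z) \<le> real N * Dl N (fst z) + real N * Dl N (snd z)"
  unfolding Ef_def
proof (rule cSUP_least)
  fix j
  obtain x y where z: "z = (x, y)" by (cases z)
  have b: "bdd_above (range (\<lambda>j. \<bar>(\<Sum>i<N. of_bool (w i j)) / real N - pp j\<bar>))" for w :: "nat \<Rightarrow> nat \<Rightarrow> bool"
    by (rule bdd_abs[where C=1]) (simp only: abs_abs avg_pp_abs)
  have eq: "(\<Sum>i<N. s i * (of_bool (fst (sw N s z) i j) - of_bool (snd (sw N s z) i j)))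
      = (\<Sum>i<N. of_bool (x i j) - of_bool (y i j))"
  proof (rule sum.cong[OF refl])
    fix i assume "i \<in> {..<N}"
    hence "s i = 1 \<or> s i = -1" using s by (auto simp: pm1_def)
    thus "s i * (of_bool (fst (sw N s z) i j) - of_bool (snd (sw N s z) i j)) = (of_bool (x i j) - of_bool (y i j) :: real)"
      using \<open>i \<in> {..<N}\<close> by (auto simp: sw_def z)
  qed
  have "(\<Sum>i<N. of_bool (x i j) - of_bool (y i j) :: real)
      \<le> real N * \<bar>(\<Sum>i<N. of_bool (x i j)) / real N - pp j\<bar> + real N * \<bar>(\<Sum>i<N. of_bool (y i j)) / real N - pp j\<bar>"
  proof (cases "N = 0")
    case True then show ?thesis by simp
  next
    case False
    have "(\<Sum>i<N. of_bool (x i j) - of_bool (y i j) :: real)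
        = real N * ((\<Sum>i<N. of_bool (x i j)) / real N - pp j) - real N * ((\<Sum>i<N. of_bool (y i j)) / real N - pp j)"
      using False by (simp add: sum_subtractf algebra_simps)
    also have "\<dots> \<le> real N * \<bar>(\<Sum>i<N. of_bool (x i j)) / real N - pp j\<bar> + real N * \<bar>(\<Sum>i<N. of_bool (y i j)) / real N - pp j\<bar>"
    proof -
      let ?a = "(\<Sum>i<N. of_bool (x i j)) / real N - pp j" and ?b = "(\<Sum>i<N. of_bool (y i j)) / real N - pp j"
      have "real N * ?a \<le> real N * \<bar>?a\<bar>" by (intro mult_left_mono) auto
      moreover have "real N * (- ?b) \<le> real N * \<bar>?b\<bar>" by (intro mult_left_mono) auto
      moreover have gen: "\<And>A B P Q :: real. A \<le> P \<Longrightarrow> - B \<le> Q \<Longrightarrow> A - B \<le> P + Q" by linarith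
      ultimately show ?thesis unfolding mult_minus_right by blast
    qed
    finally show ?thesis .
  qed
  also have "\<dots> \<le> real N * Dl N x + real N * Dl N y"
    unfolding Dl_def by (intro add_mono mult_left_mono cSUP_upper[OF UNIV_I b]) auto
  finally have F: "(\<Sum>i<N. of_bool (x i j) - of_bool (y i j) :: real) \<le> real N * Dl N x + real N * Dl N y" .
  show "(\<Sum>i<N. s i * (of_bool (fst (sw N s z) i j) - of_bool (snd (sw N s z) i j))) \<le> real N * Dl N (fst z) + real N * Dl N (snd z)"
    unfolding eq using F by (simp only: z fst_conv snd_conv)
qed simp


subsection \<open>Measurability and integrability\<close>

lemma ravg_int:
  assumes "\<And>s. integrable M (F s)"
  shows "integrable M (\<lambda>x. ravg n (\<lambda>s. F s x)) \<and> (\<integral>x. ravg n (\<lambda>s. F s x) \<partial>M) = ravg n (\<lambda>s. \<integral>x. F s x \<partial>M)"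
  using assms
proof (induction n arbitrary: F)
  case 0
  then show ?case by simp
next
  case (Suc n)
  have i1: "integrable M (\<lambda>x. ravg n (\<lambda>s. F (s(n := 1)) x))" and
       e1: "(\<integral>x. ravg n (\<lambda>s. F (s(n := 1)) x) \<partial>M) = ravg n (\<lambda>s. \<integral>x. F (s(n := 1)) x \<partial>M)"
    using Suc.IH[of "\<lambda>s. F (s(n := 1))"] Suc.prems by auto
  have i2: "integrable M (\<lambda>x. ravg n (\<lambda>s. F (s(n := -1)) x))" and
       e2: "(\<integral>x. ravg n (\<lambda>s. F (s(n := -1)) x) \<partial>M) = ravg n (\<lambda>s. \<integral>x. F (s(n := -1)) x \<partial>M)"
    using Suc.IH[of "\<lambda>s. F (s(n := -1))"] Suc.prems by auto
  show ?case using i1 i2 e1 e2 by simp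
qed

lemma meas_sup:
  fixes f :: "'t::countable \<Rightarrow> 'a \<Rightarrow> real"
  assumes "\<And>t. (\<lambda>x. f t x) \<in> borel_measurable M" "\<And>t x. \<bar>f t x\<bar> \<le> C x"
  shows "(\<lambda>x. SUP t. f t x) \<in> borel_measurable M"
proof (rule borel_measurable_cSUP)
  fix x show "bdd_above (range (\<lambda>t. f t x))" by (rule bdd_abs[where C="C x"]) (rule assms(2))
qed (use assms in auto)

lemma abs_diff_01: "0 \<le> a \<Longrightarrow> a \<le> 1 \<Longrightarrow> 0 \<le> b \<Longrightarrow> b \<le> 1 \<Longrightarrow> \<bar>a - b\<bar> \<le> (1::real)"
  by auto

lemma meas_Aavg[measurable]: "(\<lambda>x. Aavg N t x) \<in> borel_measurable (PN N)"
  unfolding Aavg_def by measurable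

lemma abs_Aavg: "\<bar>Aavg N t x\<bar> \<le> 1" using Aavg_bound[of N t x] by simp

lemma meas_Gf[measurable]: "Gf N \<in> borel_measurable (PN N)"
proof -
  have "(\<lambda>x. Gf N x) \<in> borel_measurable (PN N)"
    unfolding Gf_def
    by (rule meas_sup[where C="\<lambda>_. 1"], measurable) (rule abs_diff_01[OF xi_bound Aavg_bound])
  thus ?thesis by simp
qed

lemma abs_Gf: "\<bar>Gf N x\<bar> \<le> 1"
  unfolding Gf_def by (rule sup_abs_bound) (rule abs_diff_01[OF xi_bound Aavg_bound])

lemma meas_Df[measurable]: "Df N \<in> borel_measurable (PN N \<Otimes>\<^sub>M PN N)"
proof -
  have "(\<lambda>z. Df N z) \<in> borel_measurable (PN N \<Otimes>\<^sub>M PN N)"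
    unfolding Df_def
    by (rule meas_sup[where C="\<lambda>_. 1"], measurable) (rule abs_diff_01[OF Aavg_bound Aavg_bound])
  thus ?thesis by simp
qed

lemma abs_Df: "\<bar>Df N z\<bar> \<le> 1"
  unfolding Df_def by (rule sup_abs_bound) (rule abs_diff_01[OF Aavg_bound Aavg_bound])

lemma meas_Vf[measurable]: "Vf N s \<in> borel_measurable (PN N)"
proof -
  have "(\<lambda>x. Vf N s x) \<in> borel_measurable (PN N)"
    unfolding Vf_def
    by (rule meas_sup[where C="\<lambda>_. \<Sum>i<N. \<bar>s i\<bar>"], measurable) (rule sum_s_bound, simp)
  thus ?thesis by simp
qed

lemma abs_Vf: "\<bar>Vf N s x\<bar> \<le> (\<Sum>i<N. \<bar>s i\<bar>)"
  unfolding Vf_def by (rule sup_abs_bound, rule sum_s_bound) simp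

lemma meas_Lf[measurable]: "Lf N s \<in> borel_measurable (PN N)"
proof -
  have "(\<lambda>x. Lf N s x) \<in> borel_measurable (PN N)"
    unfolding Lf_def
    by (rule meas_sup[where C="\<lambda>_. \<Sum>i<N. \<bar>s i\<bar>"], measurable) (rule sum_s_bound, rule abs_ob)
  thus ?thesis by simp
qed

lemma abs_Lf: "\<bar>Lf N s x\<bar> \<le> (\<Sum>i<N. \<bar>s i\<bar>)"
  unfolding Lf_def by (rule sup_abs_bound, rule sum_s_bound, rule abs_ob)

lemma meas_Bf[measurable]: "Bf N s \<in> borel_measurable (PN N)"
proof -
  have "(\<lambda>x. Bf N s x) \<in> borel_measurable (PN N)"
    unfolding Bf_def
    by (rule meas_sup[where C="\<lambda>_. \<Sum>i<N. \<bar>s i\<bar>"], measurable) (rule sum_s_bound, rule abs_obp)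
  thus ?thesis by simp
qed

lemma abs_Bf: "\<bar>Bf N s x\<bar> \<le> (\<Sum>i<N. \<bar>s i\<bar>)"
  unfolding Bf_def by (rule sup_abs_bound, rule sum_s_bound, rule abs_obp)

lemma meas_Ef[measurable]: "Ef N s \<in> borel_measurable (PN N \<Otimes>\<^sub>M PN N)"
proof -
  have "(\<lambda>x. Ef N s x) \<in> borel_measurable (PN N \<Otimes>\<^sub>M PN N)"
    unfolding Ef_def
    by (rule meas_sup[where C="\<lambda>_. \<Sum>i<N. \<bar>s i\<bar>"], measurable) (rule sum_s_bound, rule abs_ob)
  thus ?thesis by simp
qed

lemma abs_Ef: "\<bar>Ef N s x\<bar> \<le> (\<Sum>i<N. \<bar>s i\<bar>)"
  unfolding Ef_def by (rule sup_abs_bound, rule sum_s_bound, rule abs_ob)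

lemma meas_Dl[measurable]: "Dl N \<in> borel_measurable (PN N)"
proof -
  have "(\<lambda>x. Dl N x) \<in> borel_measurable (PN N)"
    unfolding Dl_def
    by (rule meas_sup[where C="\<lambda>_. 1"], measurable) (simp only: abs_abs avg_pp_abs)
  thus ?thesis by simp
qed

lemma abs_Dl: "\<bar>Dl N x\<bar> \<le> 1"
  unfolding Dl_def by (rule sup_abs_bound) (simp only: abs_abs avg_pp_abs)


lemma psf_M2: "pair_sigma_finite (PN N) (PN N)"
  by (intro pair_sigma_finite.intro sf_PN)

lemma int_M2_bdd:
  fixes f :: "_ \<Rightarrow> real"
  assumes "f \<in> borel_measurable (PN N \<Otimes>\<^sub>M PN N)" "\<And>z. \<bar>f z\<bar> \<le> C"
  shows "integrable (PN N \<Otimes>\<^sub>M PN N) f"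
  using assms by (intro intb[OF fm_M2]) auto

lemma int_PN_bdd:
  fixes f :: "_ \<Rightarrow> real"
  assumes "f \<in> borel_measurable (PN N)" "\<And>z. \<bar>f z\<bar> \<le> C"
  shows "integrable (PN N) f"
  using assms by (intro intb[OF fm_PN]) auto

lemma fub:
  fixes f :: "_ \<Rightarrow> real"
  assumes "f \<in> borel_measurable (PN N \<Otimes>\<^sub>M PN N)" "\<And>z. \<bar>f z\<bar> \<le> C"
  shows "integral\<^sup>L (PN N \<Otimes>\<^sub>M PN N) f = (\<integral>x. (\<integral>y. f (x, y) \<partial>PN N) \<partial>PN N)"
    and "integrable (PN N) (\<lambda>x. \<integral>y. f (x, y) \<partial>PN N)"
proof -
  interpret P: pair_sigma_finite "PN N" "PN N" by (rule psf_M2)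
  have i: "integrable (PN N \<Otimes>\<^sub>M PN N) f" by (rule int_M2_bdd[OF assms])
  show "integral\<^sup>L (PN N \<Otimes>\<^sub>M PN N) f = (\<integral>x. (\<integral>y. f (x, y) \<partial>PN N) \<partial>PN N)"
    using P.integral_fst'[OF i] by simp
  show "integrable (PN N) (\<lambda>x. \<integral>y. f (x, y) \<partial>PN N)"
    using P.integrable_fst'[OF i] by simp
qed

lemma PN_const[simp]: "(\<integral>x. c \<partial>PN N) = (c::real)"
  using prob_space.prob_space[OF prob_PN] by simp

lemma M2_fst:
  fixes g :: "_ \<Rightarrow> real"
  assumes [measurable]: "g \<in> borel_measurable (PN N)" and b: "\<And>x. \<bar>g x\<bar> \<le> C"
  shows "(\<integral>z. g (fst z) \<partial>(PN N \<Otimes>\<^sub>M PN N)) = integral\<^sup>L (PN N) g"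
  using fub(1)[of "\<lambda>z. g (fst z)" N C] b by (simp add: prob_space.prob_space[OF prob_PN])

lemma M2_snd:
  fixes g :: "_ \<Rightarrow> real"
  assumes [measurable]: "g \<in> borel_measurable (PN N)" and b: "\<And>x. \<bar>g x\<bar> \<le> C"
  shows "(\<integral>z. g (snd z) \<partial>(PN N \<Otimes>\<^sub>M PN N)) = integral\<^sup>L (PN N) g"
  using fub(1)[of "\<lambda>z. g (snd z)" N C] b by (simp add: prob_space.prob_space[OF prob_PN])

lemma meas_neq: "i < N \<Longrightarrow> (\<lambda>y. of_bool (y i j \<noteq> y i k) :: real) \<in> borel_measurable (PN N)"
  by (simp only: of_bool_neq) (intro borel_measurable_abs borel_measurable_diff meas_fb)

lemma intg_neq: "i < N \<Longrightarrow> integrable (PN N) (\<lambda>y. of_bool (y i j \<noteq> y i k) :: real)"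
  by (rule int_PN_bdd[where C=1], erule meas_neq) simp

lemma intg_c: "i < N \<Longrightarrow> integrable (PN N) (\<lambda>y. c * (a - of_bool (y i j)) :: real)"
proof (rule int_PN_bdd[where C="\<bar>c\<bar> * (\<bar>a\<bar> + 1)"])
  assume "i < N"
  thus "(\<lambda>y. c * (a - of_bool (y i j)) :: real) \<in> borel_measurable (PN N)"
    by (intro borel_measurable_times borel_measurable_const borel_measurable_diff meas_fb)
  fix z :: "nat \<Rightarrow> nat \<Rightarrow> bool"
  have "\<bar>a - of_bool (z i j)\<bar> \<le> \<bar>a\<bar> + 1" by auto
  thus "\<bar>c * (a - of_bool (z i j))\<bar> \<le> \<bar>c\<bar> * (\<bar>a\<bar> + 1)"
    unfolding abs_mult by (intro mult_left_mono) auto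
qed

lemma intg_fb: "i < N \<Longrightarrow> integrable (PN N) (\<lambda>y. of_bool (y i j) :: real)"
  by (rule int_PN_bdd[where C=1], erule meas_fb) simp

lemma int_Aavg:
  assumes "0 < N"
  shows "(\<integral>y. Aavg N t y \<partial>PN N) = xi \<mu> (fst t) (snd t)"
proof -
  have "(\<integral>y. Aavg N t y \<partial>PN N) = (\<Sum>i<N. (\<integral>y. of_bool (y i (fst t) \<noteq> y i (snd t)) \<partial>PN N)) / real N"
    unfolding Aavg_def integral_divide_zero
    by (rule arg_cong[where f="\<lambda>a. a / real N"], rule Bochner_Integration.integral_sum[where f="\<lambda>(i::nat) (y::nat\<Rightarrow>nat\<Rightarrow>bool). of_bool (y i (fst t) \<noteq> y i (snd t)) :: real"])
       (rule intg_neq, simp)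
  also have "\<dots> = (\<Sum>i<N. xi \<mu> (fst t) (snd t)) / real N"
  proof -
    have "(\<integral>y. of_bool (y i (fst t) \<noteq> y i (snd t)) \<partial>PN N) = xi \<mu> (fst t) (snd t)" if "i < N" for i
      using int_comp[OF that, of "\<lambda>\<omega>. of_bool (\<omega> (fst t) \<noteq> \<omega> (snd t))"] int_xi by simp
    thus ?thesis by (intro arg_cong[where f="\<lambda>a. a / real N"] sum.cong) auto
  qed
  also have "\<dots> = xi \<mu> (fst t) (snd t)" using assms by simp
  finally show ?thesis .
qed

lemma int_B:
  shows "(\<integral>y. (\<Sum>i<N. s i * (of_bool (x i j) - of_bool (y i j))) \<partial>PN N) = (\<Sum>i<N. s i * (of_bool (x i j) - pp j))"
proof -
  have "(\<integral>y. (\<Sum>i<N. s i * (of_bool (x i j) - of_bool (y i j))) \<partial>PN N)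
      = (\<Sum>i<N. (\<integral>y. s i * (of_bool (x i j) - of_bool (y i j)) \<partial>PN N))"
    by (rule Bochner_Integration.integral_sum[where f="\<lambda>(i::nat) (y::nat\<Rightarrow>nat\<Rightarrow>bool). s i * (of_bool (x i j) - of_bool (y i j))"])
       (rule intg_c, simp)
  also have "\<dots> = (\<Sum>i<N. s i * (of_bool (x i j) - pp j))"
  proof (rule sum.cong[OF refl])
    fix i assume i: "i \<in> {..<N}"
    have "(\<integral>y. s i * (of_bool (x i j) - of_bool (y i j)) \<partial>PN N)
        = s i * (of_bool (x i j) - (\<integral>y. of_bool (y i j) \<partial>PN N))"
      using i by (subst Bochner_Integration.integral_mult_right_zero, subst Bochner_Integration.integral_diff) (simp_all add: intg_fb prob_space.prob_space[OF prob_PN] finite_measure.integrable_const[OF fm_PN])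
    also have "(\<integral>y. of_bool (y i j) \<partial>PN N) = pp j"
      using int_comp[of i N "\<lambda>\<omega>. of_bool (\<omega> j)"] i int_pp by simp
    finally show "(\<integral>y. s i * (of_bool (x i j) - of_bool (y i j)) \<partial>PN N) = s i * (of_bool (x i j) - pp j)" .
  qed
  finally show ?thesis .
qed


lemma Gf_le:
  assumes N: "0 < N" and x: "x \<in> space (PN N)"
  shows "Gf N x \<le> (\<integral>y. Df N (x, y) \<partial>PN N)"
  unfolding Gf_def
proof (rule cSUP_least)
  fix t :: "nat \<times> nat"
  have m: "(\<lambda>y. Df N (x, y)) \<in> borel_measurable (PN N)"
    by (rule measurable_Pair2[OF meas_Df x])
  have i1: "integrable (PN N) (\<lambda>y. Df N (x, y))"
    by (rule int_PN_bdd[OF m abs_Df])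
  have i2: "integrable (PN N) (\<lambda>y. Aavg N t y - Aavg N t x)"
    by (rule int_PN_bdd[where C=1]) (measurable, rule abs_diff_01[OF Aavg_bound Aavg_bound])
  have bdd: "bdd_above (range (\<lambda>t. Aavg N t (snd (x, y)) - Aavg N t (fst (x, y))))" for y
    by (rule bdd_abs[where C=1], rule abs_diff_01[OF Aavg_bound Aavg_bound])
  have "xi \<mu> (fst t) (snd t) - Aavg N t x = (\<integral>y. Aavg N t y - Aavg N t x \<partial>PN N)"
    using N by (subst Bochner_Integration.integral_diff)
      (auto simp: int_Aavg finite_measure.integrable_const[OF fm_PN] intro: int_PN_bdd[where C=1] abs_Aavg)
  also have "\<dots> \<le> (\<integral>y. Df N (x, y) \<partial>PN N)"
  proof (rule integral_mono[OF i2 i1])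
    fix y
    show "Aavg N t y - Aavg N t x \<le> Df N (x, y)"
      unfolding Df_def using cSUP_upper[OF UNIV_I bdd[of y], of t] by simp
  qed
  finally show "xi \<mu> (fst t) (snd t) - Aavg N t x \<le> (\<integral>y. Df N (x, y) \<partial>PN N)" .
qed simp

lemma step_eps:
  assumes cov: "covering_number \<mu> \<epsilon> = \<infinity>" and N: "0 < N"
  shows "\<epsilon> \<le> integral\<^sup>L (PN N \<Otimes>\<^sub>M PN N) (Df N)"
proof -
  have "\<epsilon> = (\<integral>x. \<epsilon> \<partial>PN N)" by simp
  also have "\<dots> \<le> (\<integral>x. Gf N x \<partial>PN N)"
    by (rule integral_mono) (auto simp: finite_measure.integrable_const[OF fm_PN] intro: int_PN_bdd[OF meas_Gf abs_Gf] less_imp_le[OF Gf_gt[OF cov]])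
  also have "\<dots> \<le> (\<integral>x. (\<integral>y. Df N (x, y) \<partial>PN N) \<partial>PN N)"
    by (rule integral_mono) (auto intro: int_PN_bdd[OF meas_Gf abs_Gf] fub(2)[OF meas_Df abs_Df] Gf_le[OF N])
  also have "\<dots> = integral\<^sup>L (PN N \<Otimes>\<^sub>M PN N) (Df N)"
    by (rule fub(1)[OF meas_Df abs_Df, symmetric])
  finally show ?thesis .
qed

lemma step_swap:
  assumes N: "0 < N"
  shows "integral\<^sup>L (PN N \<Otimes>\<^sub>M PN N) (Df N) \<le> (2 / real N) * ravg N (\<lambda>s. integral\<^sup>L (PN N) (Vf N s))"
proof -
  have mV: "(\<lambda>z. (Vf N s (snd z) + Vf N (\<lambda>i. - s i) (fst z)) / real N) \<in> borel_measurable (PN N \<Otimes>\<^sub>M PN N)" for s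
    by measurable
  have bV: "\<bar>(Vf N s (snd z) + Vf N (\<lambda>i. - s i) (fst z)) / real N\<bar> \<le> ((\<Sum>i<N. \<bar>s i\<bar>) + (\<Sum>i<N. \<bar>- s i\<bar>)) / real N" for s z
    using abs_Vf[of N s "snd z"] abs_Vf[of N "\<lambda>i. - s i" "fst z"] N
    by (simp add: divide_right_mono abs_divide)
  have "integral\<^sup>L (PN N \<Otimes>\<^sub>M PN N) (Df N) = ravg N (\<lambda>s. integral\<^sup>L (PN N \<Otimes>\<^sub>M PN N) (Df N))"
    by simp
  also have "\<dots> = ravg N (\<lambda>s. \<integral>z. Df N (sw N s z) \<partial>(PN N \<Otimes>\<^sub>M PN N))"
    by (rule ravg_cong) (rule integral_sw[OF meas_Df])
  also have "\<dots> \<le> ravg N (\<lambda>s. \<integral>z. (Vf N s (snd z) + Vf N (\<lambda>i. - s i) (fst z)) / real N \<partial>(PN N \<Otimes>\<^sub>M PN N))"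
  proof (rule ravg_mono, rule integral_mono)
    fix s assume s: "pm1 N s"
    show "integrable (PN N \<Otimes>\<^sub>M PN N) (\<lambda>z. Df N (sw N s z))"
      by (rule int_M2_bdd[where C=1]) (measurable, rule abs_Df)
    show "integrable (PN N \<Otimes>\<^sub>M PN N) (\<lambda>z. (Vf N s (snd z) + Vf N (\<lambda>i. - s i) (fst z)) / real N)"
      by (rule int_M2_bdd[OF mV bV])
    fix z
    show "Df N (sw N s z) \<le> (Vf N s (snd z) + Vf N (\<lambda>i. - s i) (fst z)) / real N"
      using Df_sw[OF s, of "fst z" "snd z"] by simp
  qed
  also have "\<dots> = ravg N (\<lambda>s. (integral\<^sup>L (PN N) (Vf N s) + integral\<^sup>L (PN N) (Vf N (\<lambda>i. - s i))) / real N)"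
  proof (rule ravg_cong)
    fix s
    have "(\<integral>z. (Vf N s (snd z) + Vf N (\<lambda>i. - s i) (fst z)) / real N \<partial>(PN N \<Otimes>\<^sub>M PN N))
        = ((\<integral>z. Vf N s (snd z) \<partial>(PN N \<Otimes>\<^sub>M PN N)) + (\<integral>z. Vf N (\<lambda>i. - s i) (fst z) \<partial>(PN N \<Otimes>\<^sub>M PN N))) / real N"
      by (subst Bochner_Integration.integral_divide_zero, subst Bochner_Integration.integral_add)
         (auto intro!: int_M2_bdd[where C="\<Sum>i<N. \<bar>s i\<bar>"] int_M2_bdd[where C="\<Sum>i<N. \<bar>- s i\<bar>"] abs_Vf)
    also have "\<dots> = (integral\<^sup>L (PN N) (Vf N s) + integral\<^sup>L (PN N) (Vf N (\<lambda>i. - s i))) / real N"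
      by (simp only: M2_fst[OF meas_Vf abs_Vf] M2_snd[OF meas_Vf abs_Vf])
    finally show "(\<integral>z. (Vf N s (snd z) + Vf N (\<lambda>i. - s i) (fst z)) / real N \<partial>(PN N \<Otimes>\<^sub>M PN N))
        = (integral\<^sup>L (PN N) (Vf N s) + integral\<^sup>L (PN N) (Vf N (\<lambda>i. - s i))) / real N" .
  qed
  also have "\<dots> = (1 / real N) * (ravg N (\<lambda>s. integral\<^sup>L (PN N) (Vf N s)) + ravg N (\<lambda>s. integral\<^sup>L (PN N) (Vf N (\<lambda>i. - s i))))"
  proof -
    have "ravg N (\<lambda>s. (integral\<^sup>L (PN N) (Vf N s) + integral\<^sup>L (PN N) (Vf N (\<lambda>i. - s i))) / real N)
      = ravg N (\<lambda>s. (1 / real N) * (integral\<^sup>L (PN N) (Vf N s) + integral\<^sup>L (PN N) (Vf N (\<lambda>i. - s i))))"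
      by (rule ravg_cong) simp
    thus ?thesis by (simp only: ravg_cmult ravg_add)
  qed
  also have "ravg N (\<lambda>s. integral\<^sup>L (PN N) (Vf N (\<lambda>i. - s i))) = ravg N (\<lambda>s. integral\<^sup>L (PN N) (Vf N s))"
    by (rule ravg_neg[where F="\<lambda>s. integral\<^sup>L (PN N) (Vf N s)"])
  finally show ?thesis by simp
qed


lemma iV: "integrable (PN N) (Vf N s)" by (rule int_PN_bdd[OF meas_Vf abs_Vf])
lemma iL: "integrable (PN N) (Lf N s)" by (rule int_PN_bdd[OF meas_Lf abs_Lf])
lemma iB: "integrable (PN N) (Bf N s)" by (rule int_PN_bdd[OF meas_Bf abs_Bf])
lemma iDl: "integrable (PN N) (Dl N)" by (rule int_PN_bdd[OF meas_Dl abs_Dl])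

lemma step_contr:
  "ravg N (\<lambda>s. integral\<^sup>L (PN N) (Vf N s)) \<le> 2 * ravg N (\<lambda>s. integral\<^sup>L (PN N) (Bf N s)) + sqrt N"
proof -
  have "ravg N (\<lambda>s. integral\<^sup>L (PN N) (Vf N s)) = (\<integral>x. ravg N (\<lambda>s. Vf N s x) \<partial>PN N)"
    using ravg_int[of "PN N" "\<lambda>s. Vf N s" N] iV by simp
  also have "\<dots> \<le> (\<integral>x. ravg N (\<lambda>s. Lf N s x) \<partial>PN N)"
    using ravg_int[of "PN N" "\<lambda>s. Vf N s" N] ravg_int[of "PN N" "\<lambda>s. Lf N s" N] iV iL
    by (intro integral_mono V_L) auto
  also have "\<dots> = ravg N (\<lambda>s. integral\<^sup>L (PN N) (Lf N s))"
    using ravg_int[of "PN N" "\<lambda>s. Lf N s" N] iL by simp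
  also have "\<dots> \<le> ravg N (\<lambda>s. integral\<^sup>L (PN N) (Bf N s) + integral\<^sup>L (PN N) (Bf N (\<lambda>i. - s i)) + \<bar>\<Sum>i<N. s i\<bar>)"
  proof (rule ravg_mono)
    fix s :: "nat \<Rightarrow> real"
    have "integral\<^sup>L (PN N) (Lf N s) \<le> (\<integral>x. Bf N s x + Bf N (\<lambda>i. - s i) x + \<bar>\<Sum>i<N. s i\<bar> \<partial>PN N)"
      by (rule integral_mono) (auto intro!: iL iB L_B simp: finite_measure.integrable_const[OF fm_PN])
    also have "\<dots> = integral\<^sup>L (PN N) (Bf N s) + integral\<^sup>L (PN N) (Bf N (\<lambda>i. - s i)) + \<bar>\<Sum>i<N. s i\<bar>"
      by (simp add: iB finite_measure.integrable_const[OF fm_PN])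
    finally show "integral\<^sup>L (PN N) (Lf N s) \<le> integral\<^sup>L (PN N) (Bf N s) + integral\<^sup>L (PN N) (Bf N (\<lambda>i. - s i)) + \<bar>\<Sum>i<N. s i\<bar>" .
  qed
  also have "\<dots> = ravg N (\<lambda>s. integral\<^sup>L (PN N) (Bf N s)) + ravg N (\<lambda>s. integral\<^sup>L (PN N) (Bf N (\<lambda>i. - s i))) + ravg N (\<lambda>s. \<bar>\<Sum>i<N. s i\<bar>)"
    by (simp only: ravg_add)
  also have "ravg N (\<lambda>s. integral\<^sup>L (PN N) (Bf N (\<lambda>i. - s i))) = ravg N (\<lambda>s. integral\<^sup>L (PN N) (Bf N s))"
    by (rule ravg_neg[where F="\<lambda>s. integral\<^sup>L (PN N) (Bf N s)"])
  finally show ?thesis using ravg_abs_sum[of N] by linarith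
qed


lemma Bf_le:
  assumes x: "x \<in> space (PN N)"
  shows "Bf N s x \<le> (\<integral>y. Ef N s (x, y) \<partial>PN N)"
  unfolding Bf_def
proof (rule cSUP_least)
  fix j
  have m: "(\<lambda>y. Ef N s (x, y)) \<in> borel_measurable (PN N)"
    by (rule measurable_Pair2[OF meas_Ef x])
  have i1: "integrable (PN N) (\<lambda>y. Ef N s (x, y))"
    by (rule int_PN_bdd[OF m abs_Ef])
  have i2: "integrable (PN N) (\<lambda>y. \<Sum>i<N. s i * (of_bool (x i j) - of_bool (y i j)))"
    by (rule Bochner_Integration.integrable_sum, rule intg_c) simp
  have bdd: "bdd_above (range (\<lambda>j. \<Sum>i<N. s i * (of_bool (fst (x, y) i j) - of_bool (snd (x, y) i j))))" for y
    by (rule bdd_abs[where C="\<Sum>i<N. \<bar>s i\<bar>"], rule sum_s_bound, rule abs_ob)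
  have "(\<Sum>i<N. s i * (of_bool (x i j) - pp j)) = (\<integral>y. (\<Sum>i<N. s i * (of_bool (x i j) - of_bool (y i j))) \<partial>PN N)"
    by (rule int_B[symmetric])
  also have "\<dots> \<le> (\<integral>y. Ef N s (x, y) \<partial>PN N)"
  proof (rule integral_mono[OF i2 i1])
    fix y
    show "(\<Sum>i<N. s i * (of_bool (x i j) - of_bool (y i j))) \<le> Ef N s (x, y)"
      unfolding Ef_def using cSUP_upper[OF UNIV_I bdd[of y], of j] by simp
  qed
  finally show "(\<Sum>i<N. s i * (of_bool (x i j) - pp j)) \<le> (\<integral>y. Ef N s (x, y) \<partial>PN N)" .
qed simp


lemma Dl2: "\<bar>real N * Dl N a + real N * Dl N b\<bar> \<le> 2 * real N"
proof -
  have "\<bar>real N * Dl N a + real N * Dl N b\<bar> \<le> \<bar>real N * Dl N a\<bar> + \<bar>real N * Dl N b\<bar>" by (rule abs_triangle_ineq)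
  also have "\<dots> = real N * \<bar>Dl N a\<bar> + real N * \<bar>Dl N b\<bar>" by (simp add: abs_mult)
  also have "\<dots> \<le> real N * 1 + real N * 1" by (intro add_mono mult_left_mono abs_Dl) auto
  finally show ?thesis by simp
qed

lemma step_B:
  assumes s: "pm1 N s"
  shows "integral\<^sup>L (PN N) (Bf N s) \<le> 2 * real N * Delta N \<mu>"
proof -
  have "integral\<^sup>L (PN N) (Bf N s) \<le> (\<integral>x. (\<integral>y. Ef N s (x, y) \<partial>PN N) \<partial>PN N)"
    by (rule integral_mono) (auto intro: iB fub(2)[OF meas_Ef abs_Ef] Bf_le)
  also have "\<dots> = integral\<^sup>L (PN N \<Otimes>\<^sub>M PN N) (Ef N s)"
    by (rule fub(1)[OF meas_Ef abs_Ef, symmetric])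
  also have "\<dots> = (\<integral>z. Ef N s (sw N s z) \<partial>(PN N \<Otimes>\<^sub>M PN N))"
    by (rule integral_sw[OF meas_Ef])
  also have "\<dots> \<le> (\<integral>z. real N * Dl N (fst z) + real N * Dl N (snd z) \<partial>(PN N \<Otimes>\<^sub>M PN N))"
  proof (rule integral_mono)
    show "integrable (PN N \<Otimes>\<^sub>M PN N) (\<lambda>z. Ef N s (sw N s z))"
      by (rule int_M2_bdd[where C="\<Sum>i<N. \<bar>s i\<bar>"]) (measurable, rule abs_Ef)
    show "integrable (PN N \<Otimes>\<^sub>M PN N) (\<lambda>z. real N * Dl N (fst z) + real N * Dl N (snd z))"
      by (rule int_M2_bdd[where C="2 * real N"], measurable) (rule Dl2)
    fix z show "Ef N s (sw N s z) \<le> real N * Dl N (fst z) + real N * Dl N (snd z)" by (rule Ef_sw[OF s])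
  qed
  also have "\<dots> = real N * integral\<^sup>L (PN N) (Dl N) + real N * integral\<^sup>L (PN N) (Dl N)"
  proof -
    have "(\<integral>z. real N * Dl N (fst z) + real N * Dl N (snd z) \<partial>(PN N \<Otimes>\<^sub>M PN N))
      = real N * (\<integral>z. Dl N (fst z) \<partial>(PN N \<Otimes>\<^sub>M PN N)) + real N * (\<integral>z. Dl N (snd z) \<partial>(PN N \<Otimes>\<^sub>M PN N))"
      by (subst Bochner_Integration.integral_add) (auto intro!: int_M2_bdd[where C=1] abs_Dl)
    thus ?thesis by (simp only: M2_fst[OF meas_Dl abs_Dl] M2_snd[OF meas_Dl abs_Dl])
  qed
  finally show ?thesis by (simp add: Delta_eq)
qed

lemma main_bound:
  assumes cov: "covering_number \<mu> \<epsilon> = \<infinity>" and N: "0 < N"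
  shows "\<epsilon> \<le> 8 * Delta N \<mu> + 2 / sqrt N"
proof -
  have rB: "ravg N (\<lambda>s. integral\<^sup>L (PN N) (Bf N s)) \<le> 2 * real N * Delta N \<mu>"
    using ravg_mono[of N "\<lambda>s. integral\<^sup>L (PN N) (Bf N s)" "\<lambda>s. 2 * real N * Delta N \<mu>"] step_B by simp
  have "\<epsilon> \<le> (2 / real N) * ravg N (\<lambda>s. integral\<^sup>L (PN N) (Vf N s))"
    using step_eps[OF cov N] step_swap[OF N] by linarith
  also have "\<dots> \<le> (2 / real N) * (2 * (2 * real N * Delta N \<mu>) + sqrt N)"
    using step_contr[of N] rB N by (intro mult_left_mono) auto
  also have "\<dots> = 8 * Delta N \<mu> + 2 * (sqrt N / real N)"
    using N by (simp add: field_simps)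
  also have "sqrt N / real N = 1 / sqrt N"
  proof -
    have "real N / sqrt N = sqrt N" by (rule real_div_sqrt) simp
    hence "1 / sqrt N = 1 / (real N / sqrt N)" by simp
    also have "\<dots> = sqrt N / real N" by simp
    finally show ?thesis by simp
  qed
  finally show ?thesis by simp
qed


subsection \<open>Monotonicity in the sample size\<close>

lemma sum_blocks:
  fixes g :: "nat \<Rightarrow> real"
  shows "(\<Sum>i<m*n. g i) = (\<Sum>b<m. \<Sum>i<n. g (b*n + i))"
proof -
  have "(\<Sum>i<m*n. g i) = (\<Sum>b<m. sum g {b*n..<b*n+n})"
    by (rule sum.nat_group[symmetric])
  also have "\<dots> = (\<Sum>b<m. \<Sum>i<n. g (b*n + i))"
  proof (rule sum.cong[OF refl])
    fix b
    have "sum g {b*n..<b*n+n} = sum g {0 + b*n..<n + b*n}" by (simp add: add.commute)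
    also have "\<dots> = sum (\<lambda>i. g (i + b*n)) {0..<n}" by (rule sum.shift_bounds_nat_ivl)
    also have "\<dots> = (\<Sum>i<n. g (b*n + i))" by (simp add: atLeast0LessThan add.commute)
    finally show "sum g {b*n..<b*n+n} = (\<Sum>i<n. g (b*n + i))" .
  qed
  finally show ?thesis .
qed

lemma avg_split:
  fixes S :: "nat \<Rightarrow> real"
  assumes m: "0 < m"
  shows "(\<Sum>b<m. S b) / real (m*n) - c = (\<Sum>b<m. S b / real n - c) / real m"
proof -
  have "(\<Sum>b<m. S b / real n - c) = (\<Sum>b<m. S b) / real n - real m * c"
    by (simp add: sum_subtractf sum_divide_distrib[symmetric])
  thus ?thesis using m by (simp add: field_simps)
qed

definition blk :: "nat \<Rightarrow> nat \<Rightarrow> (nat \<Rightarrow> nat \<Rightarrow> bool) \<Rightarrow> (nat \<Rightarrow> nat \<Rightarrow> bool)" where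
  "blk n b x = (\<lambda>i\<in>{..<n}. x (b*n + i))"

lemma Dl_blocks:
  assumes n: "0 < n" and m: "0 < m"
  shows "Dl (m*n) x \<le> (\<Sum>b<m. Dl n (blk n b x)) / real m"
  unfolding Dl_def[of "m*n"]
proof (rule cSUP_least)
  fix j
  let ?c = "\<lambda>b. (\<Sum>i<n. of_bool (x (b*n + i) j)) / real n - pp j"
  have bdd: "bdd_above (range (\<lambda>j. \<bar>(\<Sum>i<n. of_bool (w i j)) / real n - pp j\<bar>))" for w :: "nat \<Rightarrow> nat \<Rightarrow> bool"
    by (rule bdd_abs[where C=1]) (simp only: abs_abs avg_pp_abs)
  have "(\<Sum>i<m*n. of_bool (x i j)) / real (m*n) - pp j = (\<Sum>b<m. ?c b) / real m"
    unfolding sum_blocks[of "\<lambda>i. of_bool (x i j)"] using m by (rule avg_split)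
  hence "\<bar>(\<Sum>i<m*n. of_bool (x i j)) / real (m*n) - pp j\<bar> = \<bar>\<Sum>b<m. ?c b\<bar> / real m"
    by simp
  also have "\<dots> \<le> (\<Sum>b<m. \<bar>?c b\<bar>) / real m"
    by (intro divide_right_mono sum_abs) simp
  also have "\<dots> \<le> (\<Sum>b<m. Dl n (blk n b x)) / real m"
  proof (intro divide_right_mono sum_mono)
    fix b
    have "\<bar>?c b\<bar> = \<bar>(\<Sum>i<n. of_bool (blk n b x i j)) / real n - pp j\<bar>"
      by (simp add: blk_def)
    also have "\<dots> \<le> Dl n (blk n b x)" unfolding Dl_def by (rule cSUP_upper[OF UNIV_I bdd])
    finally show "\<bar>?c b\<bar> \<le> Dl n (blk n b x)" .
  qed simp
  finally show "\<bar>(\<Sum>i<m*n. of_bool (x i j)) / real (m*n) - pp j\<bar> \<le> (\<Sum>b<m. Dl n (blk n b x)) / real m" .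
qed simp

lemma int_blk:
  assumes "b < m"
  shows "(\<integral>x. Dl n (blk n b x) \<partial>PN (m*n)) = integral\<^sup>L (PN n) (Dl n)"
proof -
  have mb[measurable]: "blk n b \<in> measurable (PN (m*n)) (PN n)"
  proof -
    have "b*n + i < m*n" if "i < n" for i
    proof -
      have "b*n + i < b*n + n" using that by simp
      also have "\<dots> = Suc b * n" by simp
      also have "\<dots> \<le> m*n" using assms by (intro mult_right_mono) auto
      finally show ?thesis .
    qed
    thus ?thesis unfolding blk_def
      by (intro measurable_restrict measurable_component_singleton) auto
  qed
  have d: "distr (PN (m*n)) (PN n) (blk n b) = PN n"
  proof -
    have "b*n + i < m*n" if "i < n" for i
    proof -
      have "b*n + i < b*n + n" using that by simp
      also have "\<dots> = Suc b * n" by simp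
      also have "\<dots> \<le> m*n" using assms by (intro mult_right_mono) auto
      finally show ?thesis .
    qed
    thus ?thesis unfolding blk_def
      using distr_PiM_reindex[of "{..<m*n}" "\<lambda>_. \<mu>" "\<lambda>i. b*n + i" "{..<n}"]
      by (auto simp: prob inj_on_def)
  qed
  have "integral\<^sup>L (PN n) (Dl n) = integral\<^sup>L (distr (PN (m*n)) (PN n) (blk n b)) (Dl n)"
    by (simp only: d)
  also have "\<dots> = (\<integral>x. Dl n (blk n b x) \<partial>PN (m*n))"
    by (rule integral_distr) measurable
  finally show ?thesis by simp
qed

lemma Delta_mono:
  assumes n: "0 < n" and m: "0 < m"
  shows "Delta (m*n) \<mu> \<le> Delta n \<mu>"
proof -
  have "Delta (m*n) \<mu> \<le> (\<integral>x. (\<Sum>b<m. Dl n (blk n b x)) / real m \<partial>PN (m*n))"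
    unfolding Delta_eq
  proof (rule integral_mono[OF iDl _ Dl_blocks[OF n m]])
    show "integrable (PN (m*n)) (\<lambda>x. (\<Sum>b<m. Dl n (blk n b x)) / real m)"
    proof (intro Bochner_Integration.integrable_divide Bochner_Integration.integrable_sum)
      fix b assume "b \<in> {..<m}"
      hence "b < m" by simp
      have mb: "blk n b \<in> measurable (PN (m*n)) (PN n)"
      proof -
        have "b*n + i < m*n" if "i < n" for i
        proof -
          have "b*n + i < b*n + n" using that by simp
          also have "\<dots> = Suc b * n" by simp
          also have "\<dots> \<le> m*n" using \<open>b < m\<close> by (intro mult_right_mono) auto
          finally show ?thesis .
        qed
        thus ?thesis unfolding blk_def
          by (intro measurable_restrict measurable_component_singleton) auto
      qed
      show "integrable (PN (m*n)) (\<lambda>x. Dl n (blk n b x))"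
        by (rule int_PN_bdd[where C=1], rule measurable_compose[OF mb meas_Dl], rule abs_Dl)
    qed
  qed
  also have "\<dots> = (\<Sum>b<m. (\<integral>x. Dl n (blk n b x) \<partial>PN (m*n))) / real m"
  proof -
    have "\<And>b. b \<in> {..<m} \<Longrightarrow> integrable (PN (m*n)) (\<lambda>x. Dl n (blk n b x))"
    proof -
      fix b assume "b \<in> {..<m}"
      hence "b < m" by simp
      have mb: "blk n b \<in> measurable (PN (m*n)) (PN n)"
      proof -
        have "b*n + i < m*n" if "i < n" for i
        proof -
          have "b*n + i < b*n + n" using that by simp
          also have "\<dots> = Suc b * n" by simp
          also have "\<dots> \<le> m*n" using \<open>b < m\<close> by (intro mult_right_mono) auto
          finally show ?thesis .
        qed
        thus ?thesis unfolding blk_def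
          by (intro measurable_restrict measurable_component_singleton) auto
      qed
      show "integrable (PN (m*n)) (\<lambda>x. Dl n (blk n b x))"
        by (rule int_PN_bdd[where C=1], rule measurable_compose[OF mb meas_Dl], rule abs_Dl)
    qed
    thus ?thesis
      by (subst Bochner_Integration.integral_divide_zero, subst Bochner_Integration.integral_sum) auto
  qed
  also have "\<dots> = (\<Sum>b<m. Delta n \<mu>) / real m"
    by (intro arg_cong[where f="\<lambda>a. a / real m"] sum.cong) (auto simp: int_blk Delta_eq)
  also have "\<dots> = Delta n \<mu>" using m by simp
  finally show ?thesis .
qed


lemma meas_fb_mu: "(\<lambda>\<omega>. of_bool (\<omega> j) :: real) \<in> borel_measurable \<mu>"
  by measurable

lemma eps_lt:
  assumes cov: "covering_number \<mu> \<epsilon> = \<infinity>"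
  shows "3 * \<epsilon> < 2"
proof -
  obtain b where b: "xi \<mu> b 0 > \<epsilon>" using cover_inf[OF cov, of "{0}"] by auto
  obtain c where c: "xi \<mu> c 0 > \<epsilon>" "xi \<mu> c b > \<epsilon>" using cover_inf[OF cov, of "{0, b}"] by auto
  have ib: "integrable \<mu> (\<lambda>\<omega>. of_bool (\<omega> j \<noteq> \<omega> k) :: real)" for j k
    by (rule intb[OF prob_space.finite_measure[OF prob], where C=1])
       (simp only: of_bool_neq, intro borel_measurable_abs borel_measurable_diff meas_fb_mu, simp)
  have "xi \<mu> b 0 + xi \<mu> c 0 + xi \<mu> c b
      = (\<integral>\<omega>. of_bool (\<omega> b \<noteq> \<omega> 0) + of_bool (\<omega> c \<noteq> \<omega> 0) + of_bool (\<omega> c \<noteq> \<omega> b) \<partial>\<mu>)"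
  proof -
    have "((\<integral>\<omega>. of_bool (\<omega> b \<noteq> \<omega> 0) + of_bool (\<omega> c \<noteq> \<omega> 0) + of_bool (\<omega> c \<noteq> \<omega> b) \<partial>\<mu>) :: real)
        = (\<integral>\<omega>. of_bool (\<omega> b \<noteq> \<omega> 0) + of_bool (\<omega> c \<noteq> \<omega> 0) \<partial>\<mu>) + (\<integral>\<omega>. of_bool (\<omega> c \<noteq> \<omega> b) \<partial>\<mu>)"
      by (rule Bochner_Integration.integral_add[OF Bochner_Integration.integrable_add[OF ib ib] ib])
    also have "((\<integral>\<omega>. of_bool (\<omega> b \<noteq> \<omega> 0) + of_bool (\<omega> c \<noteq> \<omega> 0) \<partial>\<mu>) :: real)
        = (\<integral>\<omega>. of_bool (\<omega> b \<noteq> \<omega> 0) \<partial>\<mu>) + (\<integral>\<omega>. of_bool (\<omega> c \<noteq> \<omega> 0) \<partial>\<mu>)"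
      by (rule Bochner_Integration.integral_add[OF ib ib])
    finally show ?thesis by (simp only: int_xi)
  qed
  also have "\<dots> \<le> (\<integral>\<omega>. 2 \<partial>\<mu>)"
    by (rule integral_mono[OF Bochner_Integration.integrable_add[OF Bochner_Integration.integrable_add[OF ib ib] ib] finite_measure.integrable_const[OF prob_space.finite_measure[OF prob]]]) auto
  also have "\<dots> = 2" using prob_space.prob_space[OF prob] by simp
  finally show ?thesis using b c by linarith
qed

lemma Delta_ge:
  assumes cov: "covering_number \<mu> \<epsilon> = \<infinity>" and n: "0 < n"
  shows "\<epsilon> / 8 \<le> Delta n \<mu>"
proof (rule ccontr)
  assume "\<not> ?thesis"
  hence d: "0 < \<epsilon> - 8 * Delta n \<mu>" by simp
  define d where "d = \<epsilon> - 8 * Delta n \<mu>"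
  have dpos: "0 < d" using d by (simp add: d_def)
  obtain m :: nat where m: "(2 / d)\<^sup>2 < real m" using reals_Archimedean2 by blast
  have mpos: "0 < m" using m by (metis not_gr0 of_nat_0 power2_less_0 zero_less_power2 less_asym' le_less_trans zero_le_power2 less_le)
  have mn: "0 < m * n" using mpos n by simp
  have "2 / d < sqrt (real m)"
    using real_less_rsqrt[OF m] .
  also have "sqrt (real m) \<le> sqrt (real (m * n))"
  proof -
    have "m \<le> m * n" using n by simp
    hence "real m \<le> real (m * n)" by (simp only: of_nat_le_iff)
    thus ?thesis by (rule real_sqrt_le_mono)
  qed
  finally have s: "2 / d < sqrt (real (m * n))" .
  have "2 / sqrt (real (m * n)) < d"
    using s dpos mn by (simp add: divide_less_eq mult.commute pos_divide_less_eq)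
  moreover have "\<epsilon> \<le> 8 * Delta (m*n) \<mu> + 2 / sqrt (real (m*n))"
    by (rule main_bound[OF cov mn])
  moreover have "Delta (m*n) \<mu> \<le> Delta n \<mu>" by (rule Delta_mono[OF n mpos])
  ultimately show False unfolding d_def by linarith
qed

end

theorem theorem4:
  fixes \<mu> :: "(nat \<Rightarrow> bool) measure"
  assumes "binseq_distr \<mu>"
  shows "(\<not> xi_totally_bounded \<mu> \<longrightarrow>
           (\<forall>\<epsilon>::real. 0 < \<epsilon> \<and> \<epsilon> \<le> 1 \<and> covering_number \<mu> \<epsilon> = \<infinity> \<longrightarrow>
              (\<forall>n::nat. n \<ge> 1 \<longrightarrow> Delta n \<mu> \<ge> \<epsilon>\<^sup>2 / 6)))
       \<and> ((\<lambda>n. Delta n \<mu>) \<longlonglongrightarrow> 0 \<longrightarrow> xi_totally_bounded \<mu>)"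
proof -
  interpret bsd \<mu> by (rule bsd.intro[OF assms])
  have A: "Delta n \<mu> \<ge> \<epsilon>\<^sup>2 / 6" if "0 < \<epsilon>" "covering_number \<mu> \<epsilon> = \<infinity>" "n \<ge> 1" for \<epsilon> n
  proof -
    have "3 * \<epsilon> < 2" by (rule eps_lt[OF that(2)])
    hence "\<epsilon>\<^sup>2 / 6 \<le> \<epsilon> / 8" using that(1) by (simp add: power2_eq_square field_simps)
    also have "\<epsilon> / 8 \<le> Delta n \<mu>" using that by (intro Delta_ge) auto
    finally show ?thesis .
  qed
  have B: "xi_totally_bounded \<mu>" if lim: "(\<lambda>n. Delta n \<mu>) \<longlonglongrightarrow> 0"
  proof (rule ccontr)
    assume "\<not> xi_totally_bounded \<mu>"
    then obtain \<epsilon> :: real where e: "0 < \<epsilon>" "\<not> covering_number \<mu> \<epsilon> < \<infinity>"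
      unfolding xi_totally_bounded_def by auto
    hence cov: "covering_number \<mu> \<epsilon> = \<infinity>" by (cases "covering_number \<mu> \<epsilon>") auto
    have "eventually (\<lambda>n. Delta n \<mu> < \<epsilon> / 8) sequentially"
      using lim e(1) by (intro order_tendstoD(2)) auto
    then obtain N0 where N0: "\<And>n. n \<ge> N0 \<Longrightarrow> Delta n \<mu> < \<epsilon> / 8"
      unfolding eventually_sequentially by blast
    have "Delta (Suc N0) \<mu> < \<epsilon> / 8" by (rule N0) simp
    moreover have "\<epsilon> / 8 \<le> Delta (Suc N0) \<mu>" by (rule Delta_ge[OF cov]) simp
    ultimately show False by simp
  qed
  show ?thesis using A B by auto
qed

end
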